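(* Let $G$ be a finitely generated acylindrically arboreal group. Then there exists a graph of groups decomposition $(\Gamma,\mathfrak{G})$ of $G$ with $\Gamma$ a finite graph such that the action of $G$ on the associated Bass–Serre tree is non-elementary and acylindrical. Furthermore, such a decomposition may be chosen to contain no contractible edges.
   Context: Groups are countable; trees are simplicial with actions without inversion. $G$ is acylindrically arboreal if it admits a non-elementary acylindrical action on a simplicial tree: acylindrical meaning for every $\epsilon\ge0$ there are $R(\epsilon),N(\epsilon)$ such that whenever $d(x,y)\ge R(\epsilon)$ at most $N(\epsilon)$ group elements move both $x,y$ by at most $\epsilon$; non-elementary meaning $G$ contains infinitely many independent loxodromic elements. For a graph of groups $(\Gamma,\mathfrak{G})$, if an edge $e$ is such that $\Gamma-e$ has exactly two components $\Gamma_a,\Gamma_b$, then $\pi_1(\Gamma,\mathfrak{G})\cong\pi_1(\Gamma_a,\mathfrak{G})*_{G_e}\pi_1(\Gamma_b,\mathfrak{G})$; such an edge is called contractible if this amalgam is trivial, i.e. $G_e$ equals one of the two factors. *)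

theory Defs
  imports Complex_Main "HOL-Algebra.Group_Action" "HOL-Algebra.Generated_Groups" "HOL-Library.Countable_Set"
begin

definition fin_gen :: "('a, 'b) monoid_scheme \<Rightarrow> bool" where
  "fin_gen G \<longleftrightarrow> (\<exists>S. finite S \<and> S \<subseteq> carrier G \<and> generate G S = carrier G)"

definition walk :: "('v \<Rightarrow> 'v \<Rightarrow> bool) \<Rightarrow> 'v list \<Rightarrow> bool" where
  "walk E xs \<longleftrightarrow> xs \<noteq> [] \<and> (\<forall>i. Suc i < length xs \<longrightarrow> E (xs ! i) (xs ! Suc i))"

definition simple_path :: "('v \<Rightarrow> 'v \<Rightarrow> bool) \<Rightarrow> 'v \<Rightarrow> 'v \<Rightarrow> 'v list \<Rightarrow> bool" where
  "simple_path E x y xs \<longleftrightarrow> walk E xs \<and> hd xs = x \<and> last xs = y \<and> distinct xs"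

definition is_tree :: "'v set \<Rightarrow> ('v \<Rightarrow> 'v \<Rightarrow> bool) \<Rightarrow> bool" where
  "is_tree V E \<longleftrightarrow> V \<noteq> {}
     \<and> (\<forall>x y. E x y \<longrightarrow> x \<in> V \<and> y \<in> V)
     \<and> (\<forall>x y. E x y \<longrightarrow> E y x)
     \<and> (\<forall>x. \<not> E x x)
     \<and> (\<forall>x\<in>V. \<forall>y\<in>V. \<exists>!xs. simple_path E x y xs)"

definition tdist :: "('v \<Rightarrow> 'v \<Rightarrow> bool) \<Rightarrow> 'v \<Rightarrow> 'v \<Rightarrow> nat" where
  "tdist E x y = (LEAST n. \<exists>xs. walk E xs \<and> hd xs = x \<and> last xs = y \<and> length xs = Suc n)"

definition gromov_prod :: "('v \<Rightarrow> 'v \<Rightarrow> bool) \<Rightarrow> 'v \<Rightarrow> 'v \<Rightarrow> 'v \<Rightarrow> real" where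
  "gromov_prod E x y z = (real (tdist E x y) + real (tdist E x z) - real (tdist E y z)) / 2"

definition tree_action ::
  "('a, 'b) monoid_scheme \<Rightarrow> 'v set \<Rightarrow> ('v \<Rightarrow> 'v \<Rightarrow> bool) \<Rightarrow> ('a \<Rightarrow> 'v \<Rightarrow> 'v) \<Rightarrow> bool" where
  "tree_action G V E \<phi> \<longleftrightarrow> is_tree V E \<and> group_action G V \<phi>
     \<and> (\<forall>g\<in>carrier G. \<forall>x\<in>V. \<forall>y\<in>V. E x y \<longleftrightarrow> E (\<phi> g x) (\<phi> g y))
     \<and> (\<forall>g\<in>carrier G. \<forall>x y. E x y \<longrightarrow> \<not> (\<phi> g x = y \<and> \<phi> g y = x))"

definition acylindrical ::
  "('a, 'b) monoid_scheme \<Rightarrow> 'v set \<Rightarrow> ('v \<Rightarrow> 'v \<Rightarrow> bool) \<Rightarrow> ('a \<Rightarrow> 'v \<Rightarrow> 'v) \<Rightarrow> bool" where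
  "acylindrical G V E \<phi> \<longleftrightarrow>
     (\<forall>\<epsilon>::real. \<epsilon> \<ge> 0 \<longrightarrow> (\<exists>(R::real) (N::nat). \<forall>x\<in>V. \<forall>y\<in>V. real (tdist E x y) \<ge> R \<longrightarrow>
        (let S = {g \<in> carrier G. real (tdist E x (\<phi> g x)) \<le> \<epsilon> \<and> real (tdist E y (\<phi> g y)) \<le> \<epsilon>}
         in finite S \<and> card S \<le> N)))"

text \<open>Loxodromic: positive stable translation length, i.e. the orbit map n \<mapsto> g^n x
  grows linearly.\<close>
definition loxodromic ::
  "('a, 'b) monoid_scheme \<Rightarrow> 'v set \<Rightarrow> ('v \<Rightarrow> 'v \<Rightarrow> bool) \<Rightarrow> ('a \<Rightarrow> 'v \<Rightarrow> 'v) \<Rightarrow> 'a \<Rightarrow> bool" where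
  "loxodromic G V E \<phi> g \<longleftrightarrow> g \<in> carrier G \<and>
     (\<exists>x\<in>V. \<exists>c::real. c > 0 \<and> (\<forall>n::nat. c * real n \<le> real (tdist E x (\<phi> (g [^]\<^bsub>G\<^esub> n) x))))"

text \<open>Independent loxodromics: the fixed points g^{\<plusminus>\<infinity>} and h^{\<plusminus>\<infinity>} on the boundary are
  pairwise distinct, expressed by boundedness of Gromov products of the orbit sequences.\<close>
definition indep_lox ::
  "('a, 'b) monoid_scheme \<Rightarrow> 'v set \<Rightarrow> ('v \<Rightarrow> 'v \<Rightarrow> bool) \<Rightarrow> ('a \<Rightarrow> 'v \<Rightarrow> 'v) \<Rightarrow> 'a \<Rightarrow> 'a \<Rightarrow> bool" where
  "indep_lox G V E \<phi> g h \<longleftrightarrow>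
     (\<exists>x\<in>V. \<exists>B::real. \<forall>g'\<in>{g, inv\<^bsub>G\<^esub> g}. \<forall>h'\<in>{h, inv\<^bsub>G\<^esub> h}. \<forall>(m::nat) (n::nat).
        gromov_prod E x (\<phi> (g' [^]\<^bsub>G\<^esub> m) x) (\<phi> (h' [^]\<^bsub>G\<^esub> n) x) \<le> B)"

definition non_elementary ::
  "('a, 'b) monoid_scheme \<Rightarrow> 'v set \<Rightarrow> ('v \<Rightarrow> 'v \<Rightarrow> bool) \<Rightarrow> ('a \<Rightarrow> 'v \<Rightarrow> 'v) \<Rightarrow> bool" where
  "non_elementary G V E \<phi> \<longleftrightarrow>
     (\<exists>L. L \<subseteq> carrier G \<and> infinite L \<and> (\<forall>g\<in>L. loxodromic G V E \<phi> g)
        \<and> (\<forall>g\<in>L. \<forall>h\<in>L. g \<noteq> h \<longrightarrow> indep_lox G V E \<phi> g h))"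

section \<open>The quotient graph of groups Gamma = T/G (Bass--Serre correspondence)\<close>

definition vorbit :: "('a, 'b) monoid_scheme \<Rightarrow> ('a \<Rightarrow> 'v \<Rightarrow> 'v) \<Rightarrow> 'v \<Rightarrow> 'v set" where
  "vorbit G \<phi> v = {\<phi> g v | g. g \<in> carrier G}"

definition eorbit :: "('a, 'b) monoid_scheme \<Rightarrow> ('a \<Rightarrow> 'v \<Rightarrow> 'v) \<Rightarrow> 'v \<Rightarrow> 'v \<Rightarrow> ('v \<times> 'v) set" where
  "eorbit G \<phi> a b = {(\<phi> g a, \<phi> g b) | g. g \<in> carrier G} \<union> {(\<phi> g b, \<phi> g a) | g. g \<in> carrier G}"

text \<open>Finite quotient graph: finitely many orbits of vertices and of edges.\<close>
definition cocompact ::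
  "('a, 'b) monoid_scheme \<Rightarrow> 'v set \<Rightarrow> ('v \<Rightarrow> 'v \<Rightarrow> bool) \<Rightarrow> ('a \<Rightarrow> 'v \<Rightarrow> 'v) \<Rightarrow> bool" where
  "cocompact G V E \<phi> \<longleftrightarrow> finite (vorbit G \<phi> ` V) \<and> finite ((\<lambda>(a, b). eorbit G \<phi> a b) ` {(a, b). E a b})"

definition comp_minus ::
  "('a, 'b) monoid_scheme \<Rightarrow> 'v set \<Rightarrow> ('v \<Rightarrow> 'v \<Rightarrow> bool) \<Rightarrow> ('a \<Rightarrow> 'v \<Rightarrow> 'v) \<Rightarrow> 'v \<Rightarrow> 'v \<Rightarrow> 'v \<Rightarrow> 'v set" where
  "comp_minus G V E \<phi> a b v =
     {w \<in> V. \<exists>xs. walk (\<lambda>x y. E x y \<and> (x, y) \<notin> eorbit G \<phi> a b) xs \<and> hd xs = v \<and> last xs = w}"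

definition setstab :: "('a, 'b) monoid_scheme \<Rightarrow> ('a \<Rightarrow> 'v \<Rightarrow> 'v) \<Rightarrow> 'v set \<Rightarrow> 'a set" where
  "setstab G \<phi> C = {g \<in> carrier G. \<phi> g ` C = C}"

definition edge_stab :: "('a, 'b) monoid_scheme \<Rightarrow> ('a \<Rightarrow> 'v \<Rightarrow> 'v) \<Rightarrow> 'v \<Rightarrow> 'v \<Rightarrow> 'a set" where
  "edge_stab G \<phi> a b = {g \<in> carrier G. \<phi> g a = a \<and> \<phi> g b = b}"

text \<open>The image e of the edge {a,b} in Gamma separates Gamma into exactly two components
  Gamma_a, Gamma_b iff the components C_a, C_b of T minus the orbit of {a,b} containing
  a and b lie in different G-orbits; then pi_1(Gamma_a) = Stab(C_a), pi_1(Gamma_b) = Stab(C_b)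
  and G_e = Stab({a,b}). The edge is contractible iff G_e equals one of the two factors.\<close>
definition contractible_edge ::
  "('a, 'b) monoid_scheme \<Rightarrow> 'v set \<Rightarrow> ('v \<Rightarrow> 'v \<Rightarrow> bool) \<Rightarrow> ('a \<Rightarrow> 'v \<Rightarrow> 'v) \<Rightarrow> 'v \<Rightarrow> 'v \<Rightarrow> bool" where
  "contractible_edge G V E \<phi> a b \<longleftrightarrow>
     (let Ca = comp_minus G V E \<phi> a b a; Cb = comp_minus G V E \<phi> a b b in
       (\<forall>g\<in>carrier G. \<phi> g ` Ca \<noteq> Cb)
       \<and> (edge_stab G \<phi> a b = setstab G \<phi> Ca \<or> edge_stab G \<phi> a b = setstab G \<phi> Cb))"

definition no_contractible_edges ::
  "('a, 'b) monoid_scheme \<Rightarrow> 'v set \<Rightarrow> ('v \<Rightarrow> 'v \<Rightarrow> bool) \<Rightarrow> ('a \<Rightarrow> 'v \<Rightarrow> 'v) \<Rightarrow> bool" where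
  "no_contractible_edges G V E \<phi> \<longleftrightarrow> (\<forall>a b. E a b \<longrightarrow> \<not> contractible_edge G V E \<phi> a b)"

end

theory Submission
  imports Defs
begin


primrec wlk :: "('v \<Rightarrow> 'v \<Rightarrow> bool) \<Rightarrow> 'v list \<Rightarrow> bool" where
  "wlk E [] = False"
| "wlk E (x # xs) = (xs = [] \<or> (E x (hd xs) \<and> wlk E xs))"

lemma walk_Cons2: "walk E (x # y # xs) \<longleftrightarrow> E x y \<and> walk E (y # xs)"
proof
  assume h: "walk E (x # y # xs)"
  have "E x y" using h unfolding walk_def by (metis length_Cons nth_Cons_0 nth_Cons_Suc zero_less_Suc One_nat_def Suc_less_eq)
  moreover have "walk E (y # xs)" unfolding walk_def
  proof (intro conjI allI impI)
    fix i assume "Suc i < length (y # xs)"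
    then have "Suc (Suc i) < length (x # y # xs)" by simp
    then show "E ((y # xs) ! i) ((y # xs) ! Suc i)" using h unfolding walk_def by (metis nth_Cons_Suc)
  qed simp
  ultimately show "E x y \<and> walk E (y # xs)" ..
next
  assume h: "E x y \<and> walk E (y # xs)"
  show "walk E (x # y # xs)" unfolding walk_def
  proof (intro conjI allI impI)
    fix i assume i: "Suc i < length (x # y # xs)"
    show "E ((x # y # xs) ! i) ((x # y # xs) ! Suc i)"
    proof (cases i)
      case 0 then show ?thesis using h by simp
    next
      case (Suc k)
      then have "Suc k < length (y # xs)" using i by simp
      then show ?thesis using h Suc unfolding walk_def by simp
    qed
  qed simp
qed

lemma walk_wlk: "walk E xs = wlk E xs"
proof (induction xs)
  case (Cons x xs)
  then show ?case
    by (cases xs) (auto simp: walk_Cons2, auto simp: walk_def)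
qed (auto simp: walk_def)

lemma wlk_nonempty: "wlk E xs \<Longrightarrow> xs \<noteq> []" by (cases xs) auto

lemma wlk_append:
  "wlk E (xs @ ys) \<longleftrightarrow> (xs = [] \<longrightarrow> wlk E ys) \<and> (ys = [] \<longrightarrow> wlk E xs) \<and>
     (xs \<noteq> [] \<and> ys \<noteq> [] \<longrightarrow> wlk E xs \<and> wlk E ys \<and> E (last xs) (hd ys))"
  by (induction xs ) (auto simp: neq_Nil_conv dest: wlk_nonempty)

lemma wlk_Cons2[simp]: "wlk E (x # y # xs) \<longleftrightarrow> E x y \<and> wlk E (y # xs)"
  by simp
lemma wlk_single[simp]: "wlk E [x]" by simp


lemma wlk_join:
  assumes "wlk E xs" "wlk E ys" "last xs = hd ys"
  shows "wlk E (xs @ tl ys)"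
  using assms by (cases ys) (auto simp: wlk_append)

lemma wlk_rev:
  assumes "\<And>x y. E x y \<Longrightarrow> E y x" "wlk E xs"
  shows "wlk E (rev xs)"
  using assms(2) by (induction xs ) (auto simp: wlk_append assms(1) last_rev)

lemma wlk_map:
  assumes "wlk E xs" "\<And>x y. x \<in> set xs \<Longrightarrow> y \<in> set xs \<Longrightarrow> E x y \<Longrightarrow> E' (f x) (f y)"
  shows "wlk E' (map f xs)"
  using assms by (induction xs ) (auto simp: hd_map)

lemma wlk_mono:
  assumes "wlk E xs" "\<And>x y. x \<in> set xs \<Longrightarrow> y \<in> set xs \<Longrightarrow> E x y \<Longrightarrow> E' x y"
  shows "wlk E' xs"
  using wlk_map[of E xs E' id] assms by simp

lemma wlk_take: "wlk E xs \<Longrightarrow> n > 0 \<Longrightarrow> wlk E (take n xs)"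
  by (induction xs arbitrary: n ) (auto simp: take_Cons' neq_Nil_conv)

lemma wlk_drop: "wlk E xs \<Longrightarrow> n < length xs \<Longrightarrow> wlk E (drop n xs)"
  by (induction xs arbitrary: n ) (auto simp: drop_Cons' neq_Nil_conv)

lemma wlk_nth: "wlk E xs \<Longrightarrow> Suc i < length xs \<Longrightarrow> E (xs ! i) (xs ! Suc i)"
  using walk_wlk[of E xs] unfolding walk_def by auto

lemma wlk_set:
  assumes "wlk E xs" "\<And>x y. E x y \<Longrightarrow> x \<in> V \<and> y \<in> V" "hd xs \<in> V"
  shows "set xs \<subseteq> V"
  using assms by (induction xs ) auto

lemma wlk_shorten:
  assumes "wlk E xs"
  shows "\<exists>ys. wlk E ys \<and> hd ys = hd xs \<and> last ys = last xs \<and> distinct ys \<and> length ys \<le> length xs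
    \<and> set ys \<subseteq> set xs"
  using assms
proof (induction "length xs" arbitrary: xs rule: less_induct)
  case less
  show ?case
  proof (cases "distinct xs")
    case True then show ?thesis using less.prems by blast
  next
    case False
    then obtain as y bs cs where xs: "xs = as @ [y] @ bs @ [y] @ cs"
      using not_distinct_decomp by blast
    let ?zs = "as @ [y] @ cs"
    have w1: "wlk E (as @ [y])" using less.prems unfolding xs
      by (simp add: wlk_append)
    have w2: "wlk E ([y] @ cs)" using less.prems unfolding xs
      by (metis append_assoc wlk_append append_is_Nil_conv list.distinct(1) self_append_conv2)
    have "wlk E ?zs" using wlk_join[OF w1 w2] by simp
    moreover have "length ?zs < length xs" unfolding xs by simp
    ultimately obtain ys where "wlk E ys \<and> hd ys = hd ?zs \<and> last ys = last ?zs \<and> distinct ys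
       \<and> length ys \<le> length ?zs \<and> set ys \<subseteq> set ?zs"
      using less.hyps by blast
    moreover have "hd ?zs = hd xs" "last ?zs = last xs" "set ?zs \<subseteq> set xs"
      by (auto simp: xs hd_append)
    ultimately show ?thesis using \<open>length ?zs < length xs\<close> by fastforce
  qed
qed


lemma sp_wlk: "simple_path E x y xs \<longleftrightarrow> wlk E xs \<and> hd xs = x \<and> last xs = y \<and> distinct xs"
  by (simp add: simple_path_def walk_wlk)

lemma tdist_le_wlk:
  assumes "wlk E xs"
  shows "tdist E (hd xs) (last xs) \<le> length xs - 1"
proof -
  have "\<exists>ws. walk E ws \<and> hd ws = hd xs \<and> last ws = last xs \<and> length ws = Suc (length xs - 1)"
    using assms wlk_nonempty[OF assms] by (intro exI[of _ xs]) (auto simp: walk_wlk)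
  then show ?thesis unfolding tdist_def by (rule Least_le)
qed

definition pth :: "('v \<Rightarrow> 'v \<Rightarrow> bool) \<Rightarrow> 'v \<Rightarrow> 'v \<Rightarrow> 'v list" where
  "pth E x y = (THE xs. simple_path E x y xs)"

locale tree =
  fixes V :: "'v set" and E :: "'v \<Rightarrow> 'v \<Rightarrow> bool"
  assumes istree: "is_tree V E"
begin

lemma E_V: "E x y \<Longrightarrow> x \<in> V \<and> y \<in> V"
  using istree unfolding is_tree_def by blast
lemma E_sym: "E x y \<Longrightarrow> E y x"
  using istree unfolding is_tree_def by blast
lemma E_irrefl: "\<not> E x x"
  using istree unfolding is_tree_def by blast
lemma V_ne: "V \<noteq> {}"
  using istree unfolding is_tree_def by blast
lemma uniq: "x \<in> V \<Longrightarrow> y \<in> V \<Longrightarrow> \<exists>!xs. simple_path E x y xs"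
  using istree unfolding is_tree_def by blast

lemma pth_sp: "x \<in> V \<Longrightarrow> y \<in> V \<Longrightarrow> simple_path E x y (pth E x y)"
  unfolding pth_def using uniq by (rule theI')

lemma sp_unique: "simple_path E x y xs \<Longrightarrow> x \<in> V \<Longrightarrow> y \<in> V \<Longrightarrow> xs = pth E x y"
  using uniq pth_sp by blast

lemma wlk_setV: "wlk E xs \<Longrightarrow> hd xs \<in> V \<Longrightarrow> set xs \<subseteq> V"
  using wlk_set[of E xs V] E_V by blast

lemma sp_lastV: "simple_path E x y xs \<Longrightarrow> x \<in> V \<Longrightarrow> y \<in> V"
  unfolding sp_wlk using wlk_setV by (metis last_in_set subsetD wlk_nonempty)

lemma sp_setV: "simple_path E x y xs \<Longrightarrow> x \<in> V \<Longrightarrow> set xs \<subseteq> V"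
  unfolding sp_wlk using wlk_setV by blast

lemma sp_rev: "simple_path E x y xs \<Longrightarrow> simple_path E y x (rev xs)"
  unfolding sp_wlk using wlk_rev[of E xs] E_sym wlk_nonempty
  by (auto simp: hd_rev last_rev)

lemma tdist_pth:
  assumes "x \<in> V" "y \<in> V"
  shows "tdist E x y = length (pth E x y) - 1"
proof -
  let ?P = "pth E x y"
  have sp: "simple_path E x y ?P" using pth_sp assms by blast
  have ne: "?P \<noteq> []" using sp unfolding sp_wlk using wlk_nonempty by blast
  show ?thesis unfolding tdist_def
  proof (rule Least_equality)
    show "\<exists>xs. walk E xs \<and> hd xs = x \<and> last xs = y \<and> length xs = Suc (length ?P - 1)"
      using sp ne unfolding simple_path_def by (intro exI[of _ ?P]) auto
  next
    fix m assume "\<exists>xs. walk E xs \<and> hd xs = x \<and> last xs = y \<and> length xs = Suc m"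
    then obtain xs where xs: "wlk E xs" "hd xs = x" "last xs = y" "length xs = Suc m"
      by (auto simp: walk_wlk)
    obtain ys where ys: "wlk E ys" "hd ys = x" "last ys = y" "distinct ys" "length ys \<le> Suc m"
      using wlk_shorten[OF xs(1)] xs by auto
    have "ys = ?P" using sp_unique[of x y ys] ys assms by (simp add: sp_wlk)
    then show "length ?P - 1 \<le> m" using ys by simp
  qed
qed

lemma tdist_sp: "simple_path E x y xs \<Longrightarrow> x \<in> V \<Longrightarrow> tdist E x y = length xs - 1"
  using tdist_pth sp_unique sp_lastV by metis

lemma tdist_refl[simp]: "tdist E x x = 0"
proof -
  have "tdist E (hd [x]) (last [x]) \<le> length [x] - 1" by (rule tdist_le_wlk) simp
  then show ?thesis by simp
qed

lemma tdist_sym: "x \<in> V \<Longrightarrow> y \<in> V \<Longrightarrow> tdist E x y = tdist E y x"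
  using tdist_sp sp_rev pth_sp by (metis length_rev)

lemma tdist_0: "x \<in> V \<Longrightarrow> y \<in> V \<Longrightarrow> tdist E x y = 0 \<longleftrightarrow> x = y"
proof
  assume "x \<in> V" "y \<in> V" "tdist E x y = 0"
  then have "length (pth E x y) - 1 = 0" using tdist_pth by simp
  moreover have "simple_path E x y (pth E x y)" using pth_sp \<open>x \<in> V\<close> \<open>y \<in> V\<close> by blast
  ultimately show "x = y" unfolding sp_wlk
    by (metis hd_conv_nth last_conv_nth length_0_conv less_one wlk_nonempty
        diff_is_0_eq le_neq_implies_less length_greater_0_conv)
qed simp

lemma tdist_tri:
  assumes "x \<in> V" "y \<in> V" "z \<in> V"
  shows "tdist E x z \<le> tdist E x y + tdist E y z"
proof -
  let ?P = "pth E x y" and ?Q = "pth E y z"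
  have P: "simple_path E x y ?P" and Q: "simple_path E y z ?Q" using pth_sp assms by auto
  have w: "wlk E (?P @ tl ?Q)" using P Q unfolding sp_wlk by (intro wlk_join) auto
  have "hd (?P @ tl ?Q) = x" using P unfolding sp_wlk by (auto simp: hd_append dest: wlk_nonempty)
  moreover have "last (?P @ tl ?Q) = z" using P Q unfolding sp_wlk
    by (metis append_butlast_last_id append_eq_append_conv2 last_appendR last_tl list.collapse wlk_nonempty
       append_Nil2 last_append last_snoc)
  ultimately have "tdist E x z \<le> length (?P @ tl ?Q) - 1" using tdist_le_wlk[OF w] by simp
  also have "\<dots> = (length ?P - 1) + (length ?Q - 1)"
  proof -
    have "length ?P > 0" "length ?Q > 0" using P Q unfolding sp_wlk by (auto dest!: wlk_nonempty)
    moreover have "length (?P @ tl ?Q) = length ?P + (length ?Q - 1)" by simp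
    ultimately show ?thesis by arith
  qed
  finally show ?thesis using tdist_pth assms by simp
qed

lemma sp_take: "simple_path E x y xs \<Longrightarrow> k < length xs \<Longrightarrow> simple_path E x (xs ! k) (take (Suc k) xs)"
proof -
  assume a: "simple_path E x y xs" "k < length xs"
  then have w: "wlk E xs" "hd xs = x" "distinct xs" unfolding sp_wlk by auto
  have ne: "xs \<noteq> []" using a by auto
  have "hd (take (Suc k) xs) = x" using w ne by (simp add: hd_take)
  moreover have "last (take (Suc k) xs) = xs ! k" using a(2)
    by (simp add: take_Suc_conv_app_nth)
  ultimately show ?thesis unfolding sp_wlk using w wlk_take[OF w(1), of "Suc k"] by simp
qed

lemma sp_drop: "simple_path E x y xs \<Longrightarrow> k < length xs \<Longrightarrow> simple_path E (xs ! k) y (drop k xs)"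
  unfolding sp_wlk by (auto simp: wlk_drop hd_drop_conv_nth)

lemma tdist_split:
  assumes "simple_path E x y xs" "x \<in> V" "k < length xs"
  shows "tdist E x (xs ! k) = k" "tdist E (xs ! k) y = length xs - 1 - k"
proof -
  have sV: "set xs \<subseteq> V" using sp_setV assms by blast
  show "tdist E x (xs ! k) = k" using tdist_sp[OF sp_take[OF assms(1,3)] assms(2)] assms(3) by simp
  show "tdist E (xs ! k) y = length xs - 1 - k"
    using tdist_sp[OF sp_drop[OF assms(1,3)]] assms(3) sV by (simp add: subset_iff)
qed

lemma tdist_via:
  assumes "simple_path E x y xs" "x \<in> V" "k < length xs"
  shows "tdist E x y = tdist E x (xs ! k) + tdist E (xs ! k) y"
  using tdist_split[OF assms] tdist_sp[OF assms(1,2)] assms(3) by simp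


lemma sp_concat:
  assumes W: "simple_path E x w W" and P: "simple_path E w z P" and xV: "x \<in> V"
    and lW: "length W \<ge> 2" and lP: "length P \<ge> 2" and d: "W ! (length W - 2) \<noteq> P ! 1"
  shows "simple_path E x z (W @ tl P)"
proof -
  have Wl: "wlk E W" "hd W = x" "last W = w" "distinct W" using W unfolding sp_wlk by auto
  have Pl: "wlk E P" "hd P = w" "last P = z" "distinct P" using P unfolding sp_wlk by auto
  have wV: "w \<in> V" using sp_lastV W xV by blast
  have Wne: "W \<noteq> []" using lW by auto
  have w0: "w = W ! (length W - 1)" using Wl Wne by (simp add: last_conv_nth)
  have Pne: "P \<noteq> []" using lP by auto
  have p0: "P ! 0 = w" using Pl Pne by (simp add: hd_conv_nth)
  have disj: "set W \<inter> set (tl P) = {}"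
  proof (rule ccontr)
    assume "set W \<inter> set (tl P) \<noteq> {}"
    then obtain v where v1: "v \<in> set W" and v2: "v \<in> set (tl P)" by blast
    obtain i where i: "i < length W" "W ! i = v" using v1 by (metis in_set_conv_nth)
    obtain j' where j': "j' < length (tl P)" "tl P ! j' = v" using v2 by (metis in_set_conv_nth)
    define j where "j = Suc j'"
    have j: "j < length P" "P ! j = v" "j \<ge> 1" using j' lP unfolding j_def by (auto simp: nth_tl)
    have "v \<noteq> w"
    proof
      assume "v = w"
      then have "P ! j = P ! 0" using j p0 by simp
      then have "j = 0" using Pl(4) j(1) lP nth_eq_iff_index_eq by fastforce
      then show False using j by simp
    qed
    then have "i \<noteq> length W - 1" using i w0 by auto
    then have iW: "i < length W - 1" using i by arith
    have s1: "simple_path E v w (drop i W)" using sp_drop[OF W i(1)] i by simp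
    have s2: "simple_path E v w (rev (take (Suc j) P))"
      using sp_rev[OF sp_take[OF P j(1)]] j p0 by (simp add: Pl(2))
    have PV: "set P \<subseteq> V" using sp_setV P wV by blast
    have vV: "v \<in> V" using j PV nth_mem by blast
    have eq: "drop i W = rev (take (Suc j) P)" using sp_unique s1 s2 vV wV by metis
    have "rev (drop i W) ! 1 = take (Suc j) P ! 1" using eq by simp
    moreover have "take (Suc j) P ! 1 = P ! 1" using j by simp
    moreover have "rev (drop i W) ! 1 = W ! (length W - 2)"
    proof -
      have "length (drop i W) \<ge> 2" using iW by simp
      then have "rev (drop i W) ! 1 = drop i W ! (length (drop i W) - 2)"
        by (simp add: rev_nth)
      also have "\<dots> = W ! (i + (length W - i - 2))" using iW by (simp add: nth_drop)
      also have "i + (length W - i - 2) = length W - 2" using iW by simp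
      finally show ?thesis .
    qed
    ultimately show False using d by simp
  qed
  have "wlk E (W @ tl P)" using wlk_join[OF Wl(1) Pl(1)] Wl Pl by simp
  moreover have "hd (W @ tl P) = x" using Wl lW by (cases W) auto
  moreover have "last (W @ tl P) = z"
  proof -
    have "tl P \<noteq> []" using lP by (cases P) auto
    then show ?thesis using Pl by (simp add: last_tl)
  qed
  moreover have "distinct (W @ tl P)" using Wl Pl disj by (simp add: distinct_tl)
  ultimately show ?thesis unfolding sp_wlk by simp
qed

end

locale tact = tree V E for V :: "'v set" and E +
  fixes G :: "('a, 'b) monoid_scheme" and \<phi> :: "'a \<Rightarrow> 'v \<Rightarrow> 'v"
  assumes grp: "group G" and ta: "tree_action G V E \<phi>"
begin

lemma ga: "group_action G V \<phi>" using ta unfolding tree_action_def by blast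

lemma phi_V: "g \<in> carrier G \<Longrightarrow> v \<in> V \<Longrightarrow> \<phi> g v \<in> V"
  using group_action.element_image[OF ga] by blast

lemma phi_E: "g \<in> carrier G \<Longrightarrow> E x y \<Longrightarrow> E (\<phi> g x) (\<phi> g y)"
  using ta E_V unfolding tree_action_def by blast

lemma no_inv: "g \<in> carrier G \<Longrightarrow> E x y \<Longrightarrow> \<phi> g x = y \<Longrightarrow> \<phi> g y = x \<Longrightarrow> False"
  using ta unfolding tree_action_def by blast

lemma phi_inj: "g \<in> carrier G \<Longrightarrow> x \<in> V \<Longrightarrow> y \<in> V \<Longrightarrow> \<phi> g x = \<phi> g y \<longleftrightarrow> x = y"
  using group_action.inj_prop[OF ga] by (meson inj_on_eq_iff)

lemma phi_mult: "g \<in> carrier G \<Longrightarrow> h \<in> carrier G \<Longrightarrow> v \<in> V \<Longrightarrow> \<phi> (g \<otimes>\<^bsub>G\<^esub> h) v = \<phi> g (\<phi> h v)"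
  using group_action.composition_rule[OF ga] by blast

lemma phi_one: "v \<in> V \<Longrightarrow> \<phi> \<one>\<^bsub>G\<^esub> v = v"
  using group_action.id_eq_one[OF ga] by (metis restrict_apply')

lemma phi_inv1: "g \<in> carrier G \<Longrightarrow> v \<in> V \<Longrightarrow> \<phi> (inv\<^bsub>G\<^esub> g) (\<phi> g v) = v"
  using group_action.orbit_sym_aux[OF ga] by blast

lemma phi_inv2: "g \<in> carrier G \<Longrightarrow> v \<in> V \<Longrightarrow> \<phi> g (\<phi> (inv\<^bsub>G\<^esub> g) v) = v"
  using phi_inv1[of "inv\<^bsub>G\<^esub> g" v] grp by (simp add: group.inv_inv)

lemma phi_pow1: "g \<in> carrier G \<Longrightarrow> v \<in> V \<Longrightarrow> \<phi> (g [^]\<^bsub>G\<^esub> Suc n) v = \<phi> (g [^]\<^bsub>G\<^esub> n) (\<phi> g v)"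
  using phi_mult grp by (simp add: group.is_monoid monoid.nat_pow_closed)

lemma phi_pow2: "g \<in> carrier G \<Longrightarrow> v \<in> V \<Longrightarrow> \<phi> (g [^]\<^bsub>G\<^esub> Suc n) v = \<phi> g (\<phi> (g [^]\<^bsub>G\<^esub> n) v)"
  using phi_mult grp monoid.nat_pow_Suc2[of G g n]
  by (simp add: group.is_monoid monoid.nat_pow_closed del: nat_pow_Suc)

lemma pow_closed[simp]: "g \<in> carrier G \<Longrightarrow> g [^]\<^bsub>G\<^esub> (n::nat) \<in> carrier G"
  using grp by (simp add: group.is_monoid monoid.nat_pow_closed)

lemma pow_one_g: "g \<in> carrier G \<Longrightarrow> g [^]\<^bsub>G\<^esub> (1::nat) = g"
  using grp by (simp add: group.is_monoid monoid.l_one)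

lemma phi_sp:
  assumes "simple_path E x y P" "x \<in> V" "g \<in> carrier G"
  shows "simple_path E (\<phi> g x) (\<phi> g y) (map (\<phi> g) P)"
proof -
  have PV: "set P \<subseteq> V" using sp_setV assms by blast
  have w: "wlk E P" "hd P = x" "last P = y" "distinct P" using assms(1) unfolding sp_wlk by auto
  have ne: "P \<noteq> []" using w wlk_nonempty by blast
  have "wlk E (map (\<phi> g) P)" using wlk_map[OF w(1), of E "\<phi> g"] phi_E assms(3) by blast
  moreover have "distinct (map (\<phi> g) P)" using w(4) PV phi_inj assms(3)
    by (simp add: distinct_map inj_on_def subset_iff)
  ultimately show ?thesis unfolding sp_wlk using w ne by (simp add: hd_map last_map)
qed

lemma tdist_phi: "g \<in> carrier G \<Longrightarrow> x \<in> V \<Longrightarrow> y \<in> V \<Longrightarrow> tdist E (\<phi> g x) (\<phi> g y) = tdist E x y"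
  using tdist_sp[OF phi_sp[OF pth_sp]] tdist_pth phi_V by simp


lemma axis_exists:
  assumes g: "g \<in> carrier G" and nofix: "\<forall>v\<in>V. \<phi> g v \<noteq> v"
  shows "\<exists>x\<in>V. \<exists>\<tau>>0. \<forall>n. tdist E x (\<phi> (g [^]\<^bsub>G\<^esub> n) x) = n * \<tau>"
proof -
  define D where "D v = tdist E v (\<phi> g v)" for v
  obtain x0 where x0: "x0 \<in> V" using V_ne by blast
  define \<tau> where "\<tau> = (LEAST t. \<exists>v\<in>V. D v = t)"
  have "\<exists>v\<in>V. D v = \<tau>" unfolding \<tau>_def using x0 LeastI_ex[of "\<lambda>t. \<exists>v\<in>V. D v = t"] by blast
  then obtain x where xV: "x \<in> V" and Dx: "D x = \<tau>" by blast
  have minD: "\<And>v. v \<in> V \<Longrightarrow> \<tau> \<le> D v" unfolding \<tau>_def by (auto intro: Least_le)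
  have gxV: "\<phi> g x \<in> V" using phi_V g xV by blast
  have tpos: "\<tau> > 0"
  proof (rule ccontr)
    assume "\<not> \<tau> > 0"
    then have "D x = 0" using Dx by simp
    then have "\<phi> g x = x" using tdist_0[OF xV gxV] unfolding D_def by simp
    then show False using nofix xV by blast
  qed
  define gi where "gi = inv\<^bsub>G\<^esub> g"
  have gi: "gi \<in> carrier G" unfolding gi_def using g grp by (simp add: group.inv_closed)
  have gixV: "\<phi> gi x \<in> V" using phi_V gi xV by blast
  define P where "P = pth E x (\<phi> g x)"
  define Q where "Q = pth E x (\<phi> gi x)"
  have P: "simple_path E x (\<phi> g x) P" unfolding P_def using pth_sp xV gxV by blast
  have Q: "simple_path E x (\<phi> gi x) Q" unfolding Q_def using pth_sp xV gixV by blast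
  have lenP: "length P = Suc \<tau>"
    using tdist_sp[OF P xV] Dx tpos P unfolding D_def sp_wlk by (auto dest!: wlk_nonempty)
  have PV: "set P \<subseteq> V" using sp_setV P xV by blast
  have QV: "set Q \<subseteq> V" using sp_setV Q xV by blast
  have gQ: "map (\<phi> g) Q = rev P"
  proof -
    have "simple_path E (\<phi> g x) (\<phi> g (\<phi> gi x)) (map (\<phi> g) Q)" using phi_sp[OF Q xV g] .
    then have "simple_path E (\<phi> g x) x (map (\<phi> g) Q)" using phi_inv2[OF g xV] gi_def by simp
    then show ?thesis using sp_unique sp_rev[OF P] gxV xV by metis
  qed
  have lenQ: "length Q = Suc \<tau>" using gQ lenP by (metis length_map length_rev)
  define c where "c = P ! 1"
  define c' where "c' = Q ! 1"
  have cV: "c \<in> V" unfolding c_def using PV lenP tpos by (simp add: subset_iff)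
  have c'V: "c' \<in> V" unfolding c'_def using QV lenQ tpos by (simp add: subset_iff)
  have gc': "\<phi> g c' = P ! (\<tau> - 1)"
  proof -
    have "\<phi> g c' = map (\<phi> g) Q ! 1" unfolding c'_def using lenQ tpos by simp
    also have "\<dots> = rev P ! 1" using gQ by simp
    also have "\<dots> = P ! (\<tau> - 1)" using lenP tpos by (simp add: rev_nth)
    finally show ?thesis .
  qed
  have Pne: "P \<noteq> []" using lenP by auto
  have P0: "P ! 0 = x" using P Pne unfolding sp_wlk by (auto simp: hd_conv_nth)
  have Plast: "P ! \<tau> = \<phi> g x" using P lenP unfolding sp_wlk
    by (metis diff_Suc_1 last_conv_nth list.size(3) nat.distinct(1))
  have cc': "c \<noteq> c'"
  proof
    assume eq: "c = c'"
    show False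
    proof (cases "\<tau> = 1")
      case True
      have "c = \<phi> g x" using Plast True unfolding c_def by simp
      moreover have "\<phi> g c = x" using gc' eq True P0 by simp
      moreover have "E x (\<phi> g x)" using wlk_nth[of E P 0] P lenP True P0 Plast unfolding sp_wlk by simp
      ultimately show False using no_inv[OF g, of x "\<phi> g x"] by simp
    next
      case False
      then have t2: "\<tau> \<ge> 2" using tpos by simp
      have sd: "simple_path E c (\<phi> g x) (drop 1 P)" using sp_drop[OF P, of 1] lenP tpos unfolding c_def by simp
      have "Suc (\<tau> - 2) = \<tau> - 1" using t2 by simp
      then have "drop 1 P ! (\<tau> - 2) = P ! (\<tau> - 1)" using t2 lenP by simp
      then have "tdist E c (P ! (\<tau> - 1)) = \<tau> - 2"
        using tdist_split(1)[OF sd cV, of "\<tau> - 2"] t2 lenP by simp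
      then have "D c = \<tau> - 2" unfolding D_def using gc' eq by simp
      then show False using minD[OF cV] tpos by simp
    qed
  qed
  have main: "\<forall>n\<ge>1. \<exists>W. simple_path E x (\<phi> (g [^]\<^bsub>G\<^esub> n) x) W \<and> length W = n * \<tau> + 1
      \<and> W ! (n * \<tau> - 1) = \<phi> (g [^]\<^bsub>G\<^esub> n) c'"
  proof (intro allI impI)
    fix n :: nat assume "n \<ge> 1"
    then show "\<exists>W. simple_path E x (\<phi> (g [^]\<^bsub>G\<^esub> n) x) W \<and> length W = n * \<tau> + 1
      \<and> W ! (n * \<tau> - 1) = \<phi> (g [^]\<^bsub>G\<^esub> n) c'"
    proof (induction n rule: dec_induct)
      case base
      show ?case using P lenP gc' by (intro exI[of _ P]) (simp add: monoid.l_one[OF group.is_monoid[OF grp] g])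
    next
      case (step n)
      then obtain W where W: "simple_path E x (\<phi> (g [^]\<^bsub>G\<^esub> n) x) W" "length W = n * \<tau> + 1"
        "W ! (n * \<tau> - 1) = \<phi> (g [^]\<^bsub>G\<^esub> n) c'" by blast
      define h where "h = g [^]\<^bsub>G\<^esub> n"
      have h: "h \<in> carrier G" unfolding h_def using g by simp
      define Pn where "Pn = map (\<phi> h) P"
      have Pn: "simple_path E (\<phi> h x) (\<phi> (g [^]\<^bsub>G\<^esub> Suc n) x) Pn"
        unfolding Pn_def using phi_sp[OF P xV h] phi_pow1[OF g xV, of n] h_def by simp
      have "n * \<tau> > 0" using step(1) tpos by simp
      then have lW: "length W \<ge> 2" using W(2) by simp
      have d: "W ! (length W - 2) \<noteq> Pn ! 1"
      proof -
        have "W ! (length W - 2) = \<phi> h c'" using W h_def by simp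
        moreover have "Pn ! 1 = \<phi> h c" unfolding Pn_def c_def using lenP tpos by simp
        ultimately show ?thesis using phi_inj[OF h c'V cV] cc' by simp
      qed
      have sp: "simple_path E x (\<phi> (g [^]\<^bsub>G\<^esub> Suc n) x) (W @ tl Pn)"
        using sp_concat[OF W(1) _ xV lW _ d] Pn h_def lenP tpos unfolding Pn_def by simp
      have len: "length (W @ tl Pn) = Suc n * \<tau> + 1" using W(2) lenP unfolding Pn_def by simp
      have pen: "(W @ tl Pn) ! (Suc n * \<tau> - 1) = \<phi> (g [^]\<^bsub>G\<^esub> Suc n) c'"
      proof (cases "\<tau> = 1")
        case True
        have "(W @ tl Pn) ! (Suc n * \<tau> - 1) = W ! (length W - 1)" using True W(2) by (simp add: nth_append)
        also have "\<dots> = \<phi> h x" using W(1) W(2) unfolding sp_wlk h_def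
          by (metis diff_Suc_1 last_conv_nth list.size(3) nat.distinct(1) Suc_eq_plus1)
        also have "\<dots> = \<phi> h (P ! (\<tau> - 1))" using P0 True by simp
        finally show ?thesis using gc' phi_pow1[OF g c'V, of n] h_def by simp
      next
        case False
        then have t2: "\<tau> \<ge> 2" using tpos by simp
        have i: "Suc n * \<tau> - 1 = length W + (\<tau> - 2)" using W(2) t2 by simp
        have "(W @ tl Pn) ! (Suc n * \<tau> - 1) = tl Pn ! (\<tau> - 2)" unfolding i by (simp add: nth_append)
        also have "\<dots> = Pn ! (\<tau> - 1)" using lenP t2 unfolding Pn_def
          by (simp add: nth_tl Suc_diff_Suc numeral_2_eq_2)
        also have "\<dots> = \<phi> h (P ! (\<tau> - 1))" unfolding Pn_def using lenP by simp
        finally show ?thesis using gc' phi_pow1[OF g c'V, of n] h_def by simp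
      qed
      show ?case using sp len pen by blast
    qed
  qed
  have "\<forall>n. tdist E x (\<phi> (g [^]\<^bsub>G\<^esub> n) x) = n * \<tau>"
  proof
    fix n :: nat
    show "tdist E x (\<phi> (g [^]\<^bsub>G\<^esub> n) x) = n * \<tau>"
    proof (cases "n = 0")
      case True then show ?thesis using phi_one xV by simp
    next
      case False
      then obtain W where "simple_path E x (\<phi> (g [^]\<^bsub>G\<^esub> n) x) W" "length W = n * \<tau> + 1"
        using main by (meson less_one not_le)
      then show ?thesis using tdist_sp xV by simp
    qed
  qed
  then show ?thesis using xV tpos by blast
qed

end



definition axis_pt :: "('a, 'b) monoid_scheme \<Rightarrow> 'v set \<Rightarrow> ('v \<Rightarrow> 'v \<Rightarrow> bool) \<Rightarrow> ('a \<Rightarrow> 'v \<Rightarrow> 'v) \<Rightarrow> 'v \<Rightarrow> bool" where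
  "axis_pt G V E \<phi> y \<longleftrightarrow> y \<in> V \<and> (\<exists>l\<in>carrier G. \<exists>\<tau>::nat. \<tau> > 0 \<and> (\<forall>n. tdist E y (\<phi> (l [^]\<^bsub>G\<^esub> n) y) = n * \<tau>))"

lemma eorbit_sym: "eorbit G \<phi> a b = eorbit G \<phi> b a"
  unfolding eorbit_def by blast

lemma comp_minus_sym: "comp_minus G V E \<phi> a b = comp_minus G V E \<phi> b a"
  unfolding comp_minus_def by (simp add: eorbit_sym)

lemma edge_stab_sym: "edge_stab G \<phi> a b = edge_stab G \<phi> b a"
  unfolding edge_stab_def by blast

locale edge_ctx = tact +
  fixes a b assumes ab: "E a b"
begin

abbreviation "Ob \<equiv> eorbit G \<phi> a b"
abbreviation "E' \<equiv> (\<lambda>x y. E x y \<and> (x, y) \<notin> Ob)"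
abbreviation "C \<equiv> comp_minus G V E \<phi> a b"

lemma aV: "a \<in> V" and bV: "b \<in> V" using E_V ab by auto

lemma O_sym: "(x, y) \<in> Ob \<Longrightarrow> (y, x) \<in> Ob"
  unfolding eorbit_def by blast

lemma O_phi1: "h \<in> carrier G \<Longrightarrow> (x, y) \<in> Ob \<Longrightarrow> (\<phi> h x, \<phi> h y) \<in> Ob"
proof -
  assume h: "h \<in> carrier G" and "(x, y) \<in> Ob"
  then obtain g where g: "g \<in> carrier G" "(x = \<phi> g a \<and> y = \<phi> g b) \<or> (x = \<phi> g b \<and> y = \<phi> g a)"
    unfolding eorbit_def by blast
  have hg: "h \<otimes>\<^bsub>G\<^esub> g \<in> carrier G" using h g grp by (simp add: group.is_monoid monoid.m_closed)
  show ?thesis using g phi_mult[OF h g(1)] aV bV hg unfolding eorbit_def by auto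
qed

lemma O_phi: "h \<in> carrier G \<Longrightarrow> x \<in> V \<Longrightarrow> y \<in> V \<Longrightarrow> (\<phi> h x, \<phi> h y) \<in> Ob \<longleftrightarrow> (x, y) \<in> Ob"
proof
  assume h: "h \<in> carrier G" and x: "x \<in> V" and y: "y \<in> V" and o: "(\<phi> h x, \<phi> h y) \<in> Ob"
  have hi: "inv\<^bsub>G\<^esub> h \<in> carrier G" using h grp by (simp add: group.inv_closed)
  show "(x, y) \<in> Ob" using O_phi1[OF hi o] phi_inv1[OF h x] phi_inv1[OF h y] by simp
qed (rule O_phi1)

lemma C_iff: "w \<in> C v \<longleftrightarrow> w \<in> V \<and> (\<exists>xs. wlk E' xs \<and> hd xs = v \<and> last xs = w)"
  unfolding comp_minus_def walk_wlk by blast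

lemma C_sub: "C v \<subseteq> V" using C_iff by blast

lemma C_refl: "v \<in> V \<Longrightarrow> v \<in> C v"
  unfolding C_iff by (intro conjI exI[of _ "[v]"]) auto

lemma C_step: "w \<in> C v \<Longrightarrow> E w w' \<Longrightarrow> (w, w') \<notin> Ob \<Longrightarrow> w' \<in> C v"
proof -
  assume w: "w \<in> C v" and e: "E w w'" "(w, w') \<notin> Ob"
  obtain xs where xs: "wlk E' xs" "hd xs = v" "last xs = w" using w C_iff by blast
  have "wlk E' (xs @ [w'])" using xs e wlk_append[of E' xs "[w']"] by (auto dest: wlk_nonempty)
  moreover have "hd (xs @ [w']) = v" using xs by (auto simp: hd_append dest: wlk_nonempty)
  ultimately show ?thesis unfolding C_iff using E_V e by force
qed

lemma C_sym: "v \<in> V \<Longrightarrow> w \<in> C v \<Longrightarrow> v \<in> C w"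
proof -
  assume v: "v \<in> V" and w: "w \<in> C v"
  obtain xs where xs: "wlk E' xs" "hd xs = v" "last xs = w" using w C_iff by blast
  have "wlk E' (rev xs)" using wlk_rev[of E' xs] xs E_sym O_sym by blast
  then show ?thesis unfolding C_iff using v xs by (auto simp: hd_rev last_rev intro!: exI[of _ "rev xs"])
qed

lemma C_trans: "w \<in> C v \<Longrightarrow> u \<in> C w \<Longrightarrow> u \<in> C v"
proof -
  assume w: "w \<in> C v" and u: "u \<in> C w"
  obtain xs where xs: "wlk E' xs" "hd xs = v" "last xs = w" using w C_iff by blast
  obtain ys where ys: "wlk E' ys" "hd ys = w" "last ys = u" using u C_iff by blast
  have f1: "wlk E' (xs @ tl ys)" using wlk_join[OF xs(1) ys(1)] xs(3) ys(2) by simp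
  have f2: "hd (xs @ tl ys) = v" using xs by (auto simp: hd_append dest: wlk_nonempty)
  have f3: "last (xs @ tl ys) = u"
  proof (cases "tl ys = []")
    case True
    have "ys \<noteq> []" using ys(1) by (rule wlk_nonempty)
    then have "ys = [w]" using True ys(2) by (cases ys) auto
    then show ?thesis using xs ys True by simp
  next
    case False
    then show ?thesis using ys by (simp add: last_tl)
  qed
  have "u \<in> V" using u C_sub by blast
  then show ?thesis unfolding C_iff using f1 f2 f3 by blast
qed

lemma C_eq: "v \<in> V \<Longrightarrow> w \<in> C v \<Longrightarrow> C w = C v"
proof -
  assume v: "v \<in> V" and w: "w \<in> C v"
  have "v \<in> C w" using C_sym v w by blast
  show "C w = C v"
  proof
    show "C w \<subseteq> C v" using C_trans w by blast
    show "C v \<subseteq> C w" using C_trans \<open>v \<in> C w\<close> by blast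
  qed
qed

lemma C_phi_sub: "h \<in> carrier G \<Longrightarrow> v \<in> V \<Longrightarrow> \<phi> h ` C v \<subseteq> C (\<phi> h v)"
proof
  fix z assume h: "h \<in> carrier G" and v: "v \<in> V" and "z \<in> \<phi> h ` C v"
  then obtain w where w: "w \<in> C v" "z = \<phi> h w" by blast
  obtain xs where xs: "wlk E' xs" "hd xs = v" "last xs = w" using w C_iff by blast
  have sV: "set xs \<subseteq> V" using wlk_set[of E' xs V] xs v E_V by blast
  have "wlk E' (map (\<phi> h) xs)"
  proof (rule wlk_map[OF xs(1)])
    fix p q assume pq: "p \<in> set xs" "q \<in> set xs" "E p q \<and> (p, q) \<notin> Ob"
    then have "p \<in> V" "q \<in> V" using sV by auto
    then show "E (\<phi> h p) (\<phi> h q) \<and> (\<phi> h p, \<phi> h q) \<notin> Ob"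
      using pq(3) phi_E[OF h] O_phi[OF h] by simp
  qed
  moreover have "hd (map (\<phi> h) xs) = \<phi> h v" "last (map (\<phi> h) xs) = z"
    using xs w wlk_nonempty[OF xs(1)] by (auto simp: hd_map last_map)
  moreover have "z \<in> V" using phi_V h w C_sub by blast
  ultimately show "z \<in> C (\<phi> h v)" unfolding C_iff by blast
qed

lemma C_phi: "h \<in> carrier G \<Longrightarrow> v \<in> V \<Longrightarrow> \<phi> h ` C v = C (\<phi> h v)"
proof
  assume h: "h \<in> carrier G" and v: "v \<in> V"
  show "\<phi> h ` C v \<subseteq> C (\<phi> h v)" using C_phi_sub h v by blast
  show "C (\<phi> h v) \<subseteq> \<phi> h ` C v"
  proof
    fix z assume z: "z \<in> C (\<phi> h v)"
    have hi: "inv\<^bsub>G\<^esub> h \<in> carrier G" using h grp by (simp add: group.inv_closed)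
    have zV: "z \<in> V" using z C_sub by blast
    have "\<phi> (inv\<^bsub>G\<^esub> h) z \<in> C (\<phi> (inv\<^bsub>G\<^esub> h) (\<phi> h v))"
      using C_phi_sub[OF hi phi_V[OF h v]] z by blast
    then have "\<phi> (inv\<^bsub>G\<^esub> h) z \<in> C v" using phi_inv1 h v by simp
    moreover have "z = \<phi> h (\<phi> (inv\<^bsub>G\<^esub> h) z)" using phi_inv2 h zV by simp
    ultimately show "z \<in> \<phi> h ` C v" by blast
  qed
qed

lemma phi_one_set: assumes X: "X \<subseteq> V" shows "\<phi> \<one>\<^bsub>G\<^esub> ` X = X"
proof -
  have fx: "\<And>x. x \<in> X \<Longrightarrow> \<phi> \<one>\<^bsub>G\<^esub> x = x" using X phi_one by blast
  show ?thesis
  proof (intro equalityI subsetI)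
    fix z assume "z \<in> \<phi> \<one>\<^bsub>G\<^esub> ` X" then obtain x where "x \<in> X" "z = \<phi> \<one>\<^bsub>G\<^esub> x" by blast
    then show "z \<in> X" using fx by simp
  next
    fix z assume "z \<in> X" then show "z \<in> \<phi> \<one>\<^bsub>G\<^esub> ` X" using fx by (metis image_eqI)
  qed
qed


lemma leave:
  assumes c1: "\<forall>g\<in>carrier G. \<phi> g ` C a \<noteq> C b"
    and st: "edge_stab G \<phi> a b = setstab G \<phi> (C b)"
    and u: "u \<in> C b" and e: "E u v" and v: "v \<notin> C b"
  shows "u = b \<and> v = a"
proof -
  have "(u, v) \<in> Ob" using C_step[OF u e] v by blast
  then obtain g where g: "g \<in> carrier G" "(u = \<phi> g a \<and> v = \<phi> g b) \<or> (u = \<phi> g b \<and> v = \<phi> g a)"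
    unfolding eorbit_def by blast
  show ?thesis
  proof (cases "u = \<phi> g a \<and> v = \<phi> g b")
    case True
    then have "C u = C b" using C_eq[OF bV u] by simp
    moreover have "\<phi> g ` C a = C u" using C_phi[OF g(1) aV] True by simp
    ultimately show ?thesis using c1 g(1) by blast
  next
    case False
    then have uv: "u = \<phi> g b" "v = \<phi> g a" using g by blast+
    have "\<phi> g ` C b = C u" using C_phi[OF g(1) bV] uv by simp
    also have "\<dots> = C b" using C_eq[OF bV u] .
    finally have "g \<in> setstab G \<phi> (C b)" unfolding setstab_def using g by blast
    then have "g \<in> edge_stab G \<phi> a b" using st by simp
    then have "\<phi> g a = a" "\<phi> g b = b" unfolding edge_stab_def by auto
    then show ?thesis using uv by simp
  qed
qed

lemma boundary:
  assumes c1: "\<forall>g\<in>carrier G. \<phi> g ` C a \<noteq> C b"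
    and st: "edge_stab G \<phi> a b = setstab G \<phi> (C b)"
  shows "wlk E xs \<Longrightarrow> hd xs \<in> C b \<Longrightarrow> last xs \<notin> C b \<Longrightarrow> \<exists>j. Suc j < length xs \<and> xs ! j = b \<and> xs ! Suc j = a"
proof (induction xs)
  case Nil then show ?case by simp
next
  case (Cons x xs)
  show ?case
  proof (cases "xs = []")
    case True then show ?thesis using Cons.prems by simp
  next
    case False
    have e: "E x (hd xs)" and w: "wlk E xs" using Cons.prems(1) False by auto
    have x: "x \<in> C b" using Cons.prems(2) by simp
    show ?thesis
    proof (cases "hd xs \<in> C b")
      case True
      have "last xs \<notin> C b" using Cons.prems(3) False by simp
      then obtain j where "Suc j < length xs" "xs ! j = b" "xs ! Suc j = a" using Cons.IH w True by blast
      then show ?thesis by (intro exI[of _ "Suc j"]) simp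
    next
      case nf: False
      have "x = b \<and> hd xs = a" using leave[OF c1 st x e nf] .
      then show ?thesis using False by (intro exI[of _ 0]) (auto simp: hd_conv_nth)
    qed
  qed
qed

lemma core:
  assumes c1: "\<forall>g\<in>carrier G. \<phi> g ` C a \<noteq> C b"
    and st: "edge_stab G \<phi> a b = setstab G \<phi> (C b)"
    and P: "simple_path E p y P" and pV: "p \<in> V" and i: "Suc i < length P" "P ! i = a" "P ! Suc i = b"
    and l: "l \<in> carrier G" and tp: "(\<tau>::nat) > 0" and ax: "\<forall>n. tdist E y (\<phi> (l [^]\<^bsub>G\<^esub> n) y) = n * \<tau>"
  shows False
proof -
  have a_notin: "a \<notin> C b"
  proof
    assume "a \<in> C b"
    then have "C a = C b" using C_eq[OF bV] by simp
    moreover have "\<phi> \<one>\<^bsub>G\<^esub> ` C a = C a" using phi_one_set C_sub by blast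
    moreover have "\<one>\<^bsub>G\<^esub> \<in> carrier G" using grp by (simp add: group.is_monoid monoid.one_closed)
    ultimately show False using c1 by metis
  qed
  have Pw: "wlk E P" "hd P = p" "last P = y" "distinct P" using P unfolding sp_wlk by auto
  have yV: "y \<in> V" using sp_lastV P pV by blast
  have y_in: "y \<in> C b"
  proof (rule ccontr)
    assume yn: "y \<notin> C b"
    let ?D = "drop (Suc i) P"
    have "wlk E ?D" using wlk_drop[OF Pw(1) i(1)] .
    moreover have "hd ?D \<in> C b" using i C_refl[OF bV] by (simp add: hd_drop_conv_nth)
    moreover have "last ?D \<notin> C b" using yn Pw i(1) by simp
    ultimately obtain j where j: "Suc j < length ?D" "?D ! j = b" "?D ! Suc j = a"
      using boundary[OF c1 st] by blast
    have "P ! (Suc i + j) = P ! Suc i" using j(2) i(3) j(1) by simp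
    then have "j = 0" using Pw(4) j(1) by (simp add: nth_eq_iff_index_eq)
    have "?D ! Suc j = P ! (Suc i + Suc j)" using i(1) by (simp add: nth_drop)
    then have "P ! (Suc (Suc i)) = P ! i" using j(3) i(2) \<open>j = 0\<close> by simp
    then show False using Pw(4) j(1) i(1) \<open>j = 0\<close> by (simp add: nth_eq_iff_index_eq)
  qed
  have via: "tdist E y q = tdist E y a + tdist E a q" if q: "q \<in> V" "q \<notin> C b" for q
  proof -
    let ?R = "pth E y q"
    have R: "simple_path E y q ?R" using pth_sp yV q by blast
    have Rw: "wlk E ?R" "hd ?R = y" "last ?R = q" using R unfolding sp_wlk by auto
    obtain j where j: "Suc j < length ?R" "?R ! Suc j = a"
      using boundary[OF c1 st Rw(1)] Rw y_in q by auto
    show ?thesis using tdist_via[OF R yV j(1)] j by simp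
  qed
  have l1: "l [^]\<^bsub>G\<^esub> (1::nat) = l" using pow_one_g[OF l] .
  define li where "li = inv\<^bsub>G\<^esub> l"
  have li: "li \<in> carrier G" unfolding li_def using l grp by (simp add: group.inv_closed)
  have d1: "tdist E y (\<phi> l y) = \<tau>" using ax[rule_format, of 1] l1 by simp
  have lyV: "\<phi> l y \<in> V" and liyV: "\<phi> li y \<in> V" using phi_V l li yV by auto
  have d2: "tdist E y (\<phi> li y) = \<tau>"
  proof -
    have "tdist E (\<phi> l (\<phi> li y)) (\<phi> l y) = tdist E (\<phi> li y) y" using tdist_phi[OF l liyV yV] .
    then have "tdist E y (\<phi> l y) = tdist E (\<phi> li y) y" using phi_inv2[OF l yV] li_def by simp
    then show ?thesis using d1 tdist_sym[OF liyV yV] by simp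
  qed
  have d3: "tdist E (\<phi> l y) (\<phi> li y) = 2 * \<tau>"
  proof -
    have "tdist E (\<phi> l (\<phi> l y)) (\<phi> l (\<phi> li y)) = tdist E (\<phi> l y) (\<phi> li y)" using tdist_phi[OF l lyV liyV] .
    moreover have "\<phi> l (\<phi> l y) = \<phi> (l [^]\<^bsub>G\<^esub> (2::nat)) y"
      using phi_pow1[OF l yV, of 1] l1 by (simp add: numeral_2_eq_2)
    moreover have "\<phi> l (\<phi> li y) = y" using phi_inv2[OF l yV] li_def by simp
    ultimately have "tdist E (\<phi> l y) (\<phi> li y) = tdist E (\<phi> (l [^]\<^bsub>G\<^esub> (2::nat)) y) y" by simp
    also have "\<dots> = 2 * \<tau>" using ax[rule_format, of 2] tdist_sym[OF yV] phi_V[OF pow_closed[OF l] yV] by simp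
    finally show ?thesis .
  qed
  have "\<phi> l y \<in> C b \<or> \<phi> li y \<in> C b"
  proof (rule ccontr)
    assume "\<not> (\<phi> l y \<in> C b \<or> \<phi> li y \<in> C b)"
    then have n1: "\<phi> l y \<notin> C b" and n2: "\<phi> li y \<notin> C b" by auto
    have "tdist E (\<phi> l y) (\<phi> li y) \<le> tdist E (\<phi> l y) a + tdist E a (\<phi> li y)"
      using tdist_tri lyV liyV aV by blast
    moreover have "tdist E (\<phi> l y) a = tdist E a (\<phi> l y)" using tdist_sym lyV aV by blast
    ultimately have "2 * \<tau> \<le> (tdist E y (\<phi> l y) - tdist E y a) + (tdist E y (\<phi> li y) - tdist E y a)"
      using via[OF lyV n1] via[OF liyV n2] d3 by simp
    then have "tdist E y a = 0" using d1 d2 via[OF lyV n1] by simp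
    then have "y = a" using tdist_0[OF yV aV] by simp
    then show False using y_in a_notin by simp
  qed
  then obtain k where k: "k \<in> carrier G" "\<phi> k y \<in> C b"
    and kax: "\<forall>n. tdist E y (\<phi> (k [^]\<^bsub>G\<^esub> n) y) = n * \<tau>"
  proof (elim disjE)
    assume "\<phi> l y \<in> C b" then show ?thesis using that l ax by blast
  next
    assume h: "\<phi> li y \<in> C b"
    have "\<forall>n. tdist E y (\<phi> (li [^]\<^bsub>G\<^esub> n) y) = n * \<tau>"
    proof
      fix n :: nat
      have e: "li [^]\<^bsub>G\<^esub> n = inv\<^bsub>G\<^esub> (l [^]\<^bsub>G\<^esub> n)" unfolding li_def using group.nat_pow_inv[OF grp l] .
      have ln: "l [^]\<^bsub>G\<^esub> n \<in> carrier G" using l by simp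
      have iV: "\<phi> (inv\<^bsub>G\<^esub> (l [^]\<^bsub>G\<^esub> n)) y \<in> V" using phi_V yV ln grp by (simp add: group.inv_closed)
      have "tdist E (\<phi> (l [^]\<^bsub>G\<^esub> n) y) (\<phi> (l [^]\<^bsub>G\<^esub> n) (\<phi> (inv\<^bsub>G\<^esub> (l [^]\<^bsub>G\<^esub> n)) y))
          = tdist E y (\<phi> (inv\<^bsub>G\<^esub> (l [^]\<^bsub>G\<^esub> n)) y)" using tdist_phi[OF ln yV iV] .
      then have "tdist E (\<phi> (l [^]\<^bsub>G\<^esub> n) y) y = tdist E y (\<phi> (inv\<^bsub>G\<^esub> (l [^]\<^bsub>G\<^esub> n)) y)"
        using phi_inv2[OF ln yV] by simp
      then show "tdist E y (\<phi> (li [^]\<^bsub>G\<^esub> n) y) = n * \<tau>"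
        using e ax tdist_sym[OF yV phi_V[OF ln yV]] by simp
    qed
    then show ?thesis using that li h by blast
  qed
  have "\<phi> k ` C b = C b"
  proof -
    have "\<phi> k ` C b = C (\<phi> k y)" using C_phi[OF k(1) yV] C_eq[OF bV y_in] by simp
    also have "\<dots> = C b" using C_eq[OF bV k(2)] .
    finally show ?thesis .
  qed
  then have "k \<in> edge_stab G \<phi> a b" using st k(1) unfolding setstab_def by simp
  then have ka: "\<phi> k a = a" unfolding edge_stab_def by simp
  have kna: "\<phi> (k [^]\<^bsub>G\<^esub> n) a = a" for n :: nat
  proof (induction n)
    case 0 then show ?case using phi_one aV by simp
  next
    case (Suc n) then show ?case using phi_pow1[OF k(1) aV, of n] ka by simp
  qed
  define n where "n = Suc (2 * tdist E y a)"
  have kn: "k [^]\<^bsub>G\<^esub> n \<in> carrier G" using k by simp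
  have "tdist E y (\<phi> (k [^]\<^bsub>G\<^esub> n) y) \<le> tdist E y a + tdist E a (\<phi> (k [^]\<^bsub>G\<^esub> n) y)"
    using tdist_tri yV aV phi_V[OF kn yV] by blast
  also have "tdist E a (\<phi> (k [^]\<^bsub>G\<^esub> n) y) = tdist E a y"
    using tdist_phi[OF kn aV yV] kna by simp
  finally have "n * \<tau> \<le> 2 * tdist E y a" using kax tdist_sym[OF yV aV] by simp
  moreover have "n \<le> n * \<tau>" using tp by simp
  ultimately show False unfolding n_def by simp
qed

end

lemma (in tact) no_contr:
  assumes H: "\<And>a b. E a b \<Longrightarrow> \<exists>P p q i. simple_path E p q P \<and> axis_pt G V E \<phi> p \<and> axis_pt G V E \<phi> q
      \<and> Suc i < length P \<and> ((P ! i = a \<and> P ! Suc i = b) \<or> (P ! i = b \<and> P ! Suc i = a))"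
  shows "no_contractible_edges G V E \<phi>"
  unfolding no_contractible_edges_def
proof (intro allI impI notI)
  fix a b assume ab: "E a b" and ctr: "contractible_edge G V E \<phi> a b"
  have dir: "\<exists>P p y i. simple_path E p y P \<and> p \<in> V \<and> axis_pt G V E \<phi> y \<and> Suc i < length P \<and> P ! i = u \<and> P ! Suc i = v"
    if uv: "(u = a \<and> v = b) \<or> (u = b \<and> v = a)" for u v
  proof -
    obtain P p q i where P: "simple_path E p q P" "axis_pt G V E \<phi> p" "axis_pt G V E \<phi> q" "Suc i < length P"
      "(P ! i = a \<and> P ! Suc i = b) \<or> (P ! i = b \<and> P ! Suc i = a)" using H[OF ab] by blast
    have pV: "p \<in> V" and qV: "q \<in> V" using P(2,3) unfolding axis_pt_def by auto
    show ?thesis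
    proof (cases "P ! i = u \<and> P ! Suc i = v")
      case True then show ?thesis using P pV by blast
    next
      case False
      then have uv': "P ! i = v \<and> P ! Suc i = u" using P(5) uv by auto
      define i' where "i' = length P - 2 - i"
      have "rev P ! i' = P ! Suc i" unfolding i'_def using P(4) by (simp add: rev_nth Suc_diff_Suc)
      moreover have "rev P ! Suc i' = P ! i" unfolding i'_def using P(4) by (simp add: rev_nth Suc_diff_Suc)
      moreover have "Suc i' < length (rev P)" unfolding i'_def using P(4) by simp
      ultimately show ?thesis using sp_rev[OF P(1)] qV P(2) uv' by blast
    qed
  qed
  interpret e1: edge_ctx V E G \<phi> a b by unfold_locales (rule ab)
  interpret e2: edge_ctx V E G \<phi> b a by unfold_locales (rule E_sym[OF ab])
  have Csym: "comp_minus G V E \<phi> b a = comp_minus G V E \<phi> a b" using comp_minus_sym by metis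
  have c1: "\<forall>g\<in>carrier G. \<phi> g ` e1.C a \<noteq> e1.C b"
    and st: "edge_stab G \<phi> a b = setstab G \<phi> (e1.C a) \<or> edge_stab G \<phi> a b = setstab G \<phi> (e1.C b)"
    using ctr unfolding contractible_edge_def Let_def by auto
  show False
    using st
  proof
    assume st1: "edge_stab G \<phi> a b = setstab G \<phi> (e1.C a)"
    have c1': "\<forall>g\<in>carrier G. \<phi> g ` e2.C b \<noteq> e2.C a"
    proof (intro ballI notI)
      fix g assume g: "g \<in> carrier G" and eq: "\<phi> g ` e2.C b = e2.C a"
      have gi: "inv\<^bsub>G\<^esub> g \<in> carrier G" using g grp by (simp add: group.inv_closed)
      have "\<phi> (inv\<^bsub>G\<^esub> g) ` e1.C a = e1.C b"
      proof -
        have "\<phi> (inv\<^bsub>G\<^esub> g) ` e1.C a = \<phi> (inv\<^bsub>G\<^esub> g) ` \<phi> g ` e1.C b" using eq Csym by simp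
        also have "\<dots> = e1.C b"
        proof -
          have "\<And>z. z \<in> e1.C b \<Longrightarrow> \<phi> (inv\<^bsub>G\<^esub> g) (\<phi> g z) = z" using phi_inv1[OF g] e1.C_sub by blast
          then show ?thesis by (simp add: image_image)
        qed
        finally show ?thesis .
      qed
      then show False using c1 gi by blast
    qed
    have st1': "edge_stab G \<phi> b a = setstab G \<phi> (e2.C a)" using st1 Csym edge_stab_sym by metis
    obtain P p y i where "simple_path E p y P" "p \<in> V" "axis_pt G V E \<phi> y" "Suc i < length P" "P ! i = b" "P ! Suc i = a"
      using dir by blast
    then show False using e2.core[OF c1' st1'] unfolding axis_pt_def by blast
  next
    assume st2: "edge_stab G \<phi> a b = setstab G \<phi> (e1.C b)"
    obtain P p y i where "simple_path E p y P" "p \<in> V" "axis_pt G V E \<phi> y" "Suc i < length P" "P ! i = a" "P ! Suc i = b"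
      using dir by blast
    then show False using e1.core[OF c1 st2] unfolding axis_pt_def by blast
  qed
qed



context tact
begin

lemma phi_pow_fix: "h \<in> carrier G \<Longrightarrow> v \<in> V \<Longrightarrow> \<phi> h v = v \<Longrightarrow> \<phi> (h [^]\<^bsub>G\<^esub> (k::nat)) v = v"
  by (induction k) (auto simp: phi_one phi_mult)

lemma lox_nofix:
  assumes lox: "loxodromic G V E \<phi> g" and v: "v \<in> V" and n: "(n::nat) \<ge> 1"
  shows "\<phi> (g [^]\<^bsub>G\<^esub> n) v \<noteq> v"
proof
  assume fx: "\<phi> (g [^]\<^bsub>G\<^esub> n) v = v"
  obtain x0 c where g: "g \<in> carrier G" and x0: "x0 \<in> V" and c: "c > 0"
    and gr: "\<forall>m::nat. c * real m \<le> real (tdist E x0 (\<phi> (g [^]\<^bsub>G\<^esub> m) x0))"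
    using lox unfolding loxodromic_def by blast
  define d where "d = tdist E x0 v"
  have bnd: "tdist E x0 (\<phi> (g [^]\<^bsub>G\<^esub> (n * k)) x0) \<le> 2 * d" for k :: nat
  proof -
    have pk: "g [^]\<^bsub>G\<^esub> (n * k) = (g [^]\<^bsub>G\<^esub> n) [^]\<^bsub>G\<^esub> k"
      using monoid.nat_pow_pow[OF group.is_monoid[OF grp] g] by simp
    have gnk: "g [^]\<^bsub>G\<^esub> (n * k) \<in> carrier G" using g by simp
    have fv: "\<phi> (g [^]\<^bsub>G\<^esub> (n * k)) v = v" unfolding pk using phi_pow_fix[OF pow_closed[OF g] v fx] .
    have "tdist E x0 (\<phi> (g [^]\<^bsub>G\<^esub> (n * k)) x0) \<le> tdist E x0 v + tdist E v (\<phi> (g [^]\<^bsub>G\<^esub> (n * k)) x0)"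
      using tdist_tri x0 v phi_V[OF gnk x0] by blast
    also have "tdist E v (\<phi> (g [^]\<^bsub>G\<^esub> (n * k)) x0) = tdist E v x0"
      using tdist_phi[OF gnk v x0] fv by simp
    finally show ?thesis unfolding d_def using tdist_sym[OF x0 v] by simp
  qed
  obtain k :: nat where k: "real (2 * d) / c < real k" using reals_Archimedean2 by blast
  have "c * real (n * k) \<le> real (2 * d)" using gr bnd[of k] by (meson of_nat_le_iff order_trans)
  moreover have "c * real k \<le> c * real (n * k)"
  proof -
    have "k \<le> n * k" using n by simp
    then show ?thesis using c by (simp add: mult_left_mono del: of_nat_mult)
  qed
  moreover have "real (2 * d) < c * real k" using k c by (simp add: field_simps)
  ultimately show False by simp
qed

lemma lox_base:
  assumes lox: "loxodromic G V E \<phi> g" and y: "y \<in> V"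
  shows "loxodromic G V E \<phi> g \<and> (\<exists>c::real. c > 0 \<and> (\<forall>n::nat. c * real n \<le> real (tdist E y (\<phi> (g [^]\<^bsub>G\<^esub> n) y))))"
proof -
  obtain x0 c where g: "g \<in> carrier G" and x0: "x0 \<in> V" and c: "c > 0"
    and gr: "\<forall>m::nat. c * real m \<le> real (tdist E x0 (\<phi> (g [^]\<^bsub>G\<^esub> m) x0))"
    using lox unfolding loxodromic_def by blast
  define D where "D = tdist E x0 y"
  obtain N :: nat where N: "4 * real D / c + 1 < real N" using reals_Archimedean2 by blast
  have "4 * real D / c \<ge> 0" using c by simp
  then have N1: "real N > 0" using N by linarith
  define c' where "c' = min (c / 2) (1 / real N)"
  have c'pos: "c' > 0" unfolding c'_def using c N1 by simp
  have "c' * real n \<le> real (tdist E y (\<phi> (g [^]\<^bsub>G\<^esub> n) y))" for n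
  proof (cases "n = 0")
    case True then show ?thesis by simp
  next
    case False
    have gn: "g [^]\<^bsub>G\<^esub> n \<in> carrier G" using g by simp
    have gyV: "\<phi> (g [^]\<^bsub>G\<^esub> n) y \<in> V" and gxV: "\<phi> (g [^]\<^bsub>G\<^esub> n) x0 \<in> V" using phi_V gn y x0 by auto
    show ?thesis
    proof (cases "n \<ge> N")
      case True
      have t1: "tdist E x0 (\<phi> (g [^]\<^bsub>G\<^esub> n) x0) \<le> tdist E x0 y + tdist E y (\<phi> (g [^]\<^bsub>G\<^esub> n) x0)"
        using tdist_tri x0 y gxV by blast
      have t2: "tdist E y (\<phi> (g [^]\<^bsub>G\<^esub> n) x0) \<le> tdist E y (\<phi> (g [^]\<^bsub>G\<^esub> n) y) + tdist E (\<phi> (g [^]\<^bsub>G\<^esub> n) y) (\<phi> (g [^]\<^bsub>G\<^esub> n) x0)"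
        using tdist_tri y gxV gyV by blast
      have t3: "tdist E (\<phi> (g [^]\<^bsub>G\<^esub> n) y) (\<phi> (g [^]\<^bsub>G\<^esub> n) x0) = D"
        unfolding D_def using tdist_phi[OF gn y x0] tdist_sym[OF y x0] by simp
      have "c * real n \<le> 2 * real D + real (tdist E y (\<phi> (g [^]\<^bsub>G\<^esub> n) y))"
        using gr[rule_format, of n] t1 t2 t3 unfolding D_def by linarith
      moreover have "4 * real D \<le> c * real n"
      proof -
        have "4 * real D / c \<le> real n" using N True by linarith
        then show ?thesis using c by (simp add: field_simps)
      qed
      moreover have "c' * real n \<le> c / 2 * real n"
      proof -
        have "c' \<le> c / 2" unfolding c'_def by simp
        then show ?thesis using mult_right_mono[of c' "c / 2" "real n"] by simp
      qed
      ultimately show ?thesis by linarith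
    next
      case False
      have "\<phi> (g [^]\<^bsub>G\<^esub> n) y \<noteq> y" using lox_nofix[OF lox y] \<open>n \<noteq> 0\<close> by simp
      then have "tdist E y (\<phi> (g [^]\<^bsub>G\<^esub> n) y) \<noteq> 0" using tdist_0[OF y gyV] by simp
      then have "tdist E y (\<phi> (g [^]\<^bsub>G\<^esub> n) y) \<ge> 1" by simp
      moreover have "c' * real n \<le> real n / real N"
      proof -
        have "c' \<le> 1 / real N" unfolding c'_def by simp
        then have "c' * real n \<le> 1 / real N * real n" using mult_right_mono[of c' "1 / real N" "real n"] by simp
        then show ?thesis by simp
      qed
      moreover have "real n / real N < 1" using False N1 by simp
      ultimately show ?thesis by linarith
    qed
  qed
  then show ?thesis using lox c'pos by blast
qed

lemma lox_at:
  assumes lox: "loxodromic G V E \<phi> g" and y: "y \<in> V"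
  obtains c where "c > 0" "\<forall>n::nat. c * real n \<le> real (tdist E y (\<phi> (g [^]\<^bsub>G\<^esub> n) y))"
  using lox_base[OF lox y] by blast

lemma indep_at:
  assumes ind: "indep_lox G V E \<phi> g h" and g: "g \<in> carrier G" and h: "h \<in> carrier G" and y: "y \<in> V"
  shows "\<exists>B::real. \<forall>g'\<in>{g, inv\<^bsub>G\<^esub> g}. \<forall>h'\<in>{h, inv\<^bsub>G\<^esub> h}. \<forall>(m::nat) (n::nat).
        gromov_prod E y (\<phi> (g' [^]\<^bsub>G\<^esub> m) y) (\<phi> (h' [^]\<^bsub>G\<^esub> n) y) \<le> B"
proof -
  obtain x0 B where x0: "x0 \<in> V" and B: "\<forall>g'\<in>{g, inv\<^bsub>G\<^esub> g}. \<forall>h'\<in>{h, inv\<^bsub>G\<^esub> h}. \<forall>(m::nat) (n::nat).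
        gromov_prod E x0 (\<phi> (g' [^]\<^bsub>G\<^esub> m) x0) (\<phi> (h' [^]\<^bsub>G\<^esub> n) x0) \<le> B"
    using ind unfolding indep_lox_def by blast
  define D where "D = tdist E x0 y"
  have "gromov_prod E y (\<phi> (g' [^]\<^bsub>G\<^esub> m) y) (\<phi> (h' [^]\<^bsub>G\<^esub> n) y) \<le> B + 3 * real D"
    if g': "g' \<in> {g, inv\<^bsub>G\<^esub> g}" and h': "h' \<in> {h, inv\<^bsub>G\<^esub> h}" for g' h' and m n :: nat
  proof -
    have g'c: "g' \<in> carrier G" using g' g grp by (auto simp: group.inv_closed)
    have h'c: "h' \<in> carrier G" using h' h grp by (auto simp: group.inv_closed)
    define a where "a = g' [^]\<^bsub>G\<^esub> m"
    define b where "b = h' [^]\<^bsub>G\<^esub> n"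
    have a: "a \<in> carrier G" and b: "b \<in> carrier G" unfolding a_def b_def using g'c h'c pow_closed by auto
    define p where "p = \<phi> a x0"
    define p' where "p' = \<phi> a y"
    define q where "q = \<phi> b x0"
    define q' where "q' = \<phi> b y"
    have V: "p \<in> V" "p' \<in> V" "q \<in> V" "q' \<in> V" unfolding p_def p'_def q_def q'_def using phi_V a b x0 y by auto
    have pp: "tdist E p p' = D" "tdist E p' p = D" "tdist E q q' = D" "tdist E q' q = D"
      unfolding p_def p'_def q_def q'_def D_def using tdist_phi a b x0 y tdist_sym by auto
    have yx: "tdist E y x0 = D" unfolding D_def using tdist_sym x0 y by simp
    have e1: "tdist E y p' \<le> tdist E y x0 + tdist E x0 p + tdist E p p'"
      using tdist_tri[OF y x0 V(2)] tdist_tri[OF x0 V(1) V(2)] by linarith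
    have e2: "tdist E y q' \<le> tdist E y x0 + tdist E x0 q + tdist E q q'"
      using tdist_tri[OF y x0 V(4)] tdist_tri[OF x0 V(3) V(4)] by linarith
    have e3: "tdist E p q \<le> tdist E p p' + tdist E p' q' + tdist E q' q"
      using tdist_tri[OF V(1) V(2) V(3)] tdist_tri[OF V(2) V(4) V(3)] by linarith
    have "gromov_prod E x0 p q \<le> B" using B g' h' unfolding p_def q_def a_def b_def by blast
    then show ?thesis unfolding gromov_prod_def p'_def[symmetric] q'_def[symmetric] a_def[symmetric] b_def[symmetric]
      using e1 e2 e3 pp yx
      by (simp add: gromov_prod_def field_simps)
  qed
  then show ?thesis by blast
qed

end



lemma wlk_by_nth: "xs \<noteq> [] \<Longrightarrow> (\<And>i. Suc i < length xs \<Longrightarrow> E (xs ! i) (xs ! Suc i)) \<Longrightarrow> wlk E xs"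
  by (simp add: walk_def flip: walk_wlk)

locale constr = tact V E G \<phi> for V E G \<phi> +
  fixes S x
  assumes Sfin: "finite S" and Ssub: "S \<subseteq> carrier G" and Sgen: "generate G S = carrier G"
    and cnt: "countable (carrier G)" and xV: "x \<in> V" and xax: "axis_pt G V E \<phi> x"
begin

definition Pth where "Pth s = pth E x (\<phi> s x)"
definition Qs where "Qs = insert x (\<Union>s\<in>S. set (Pth s))"
definition M where "M = {\<phi> g q | g q. g \<in> carrier G \<and> q \<in> Qs}"
definition EM where "EM u v \<longleftrightarrow> (\<exists>g\<in>carrier G. \<exists>s\<in>S. \<exists>i. Suc i < length (Pth s) \<and>
   ((u = \<phi> g (Pth s ! i) \<and> v = \<phi> g (Pth s ! Suc i)) \<or> (v = \<phi> g (Pth s ! i) \<and> u = \<phi> g (Pth s ! Suc i))))"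

lemma one_c: "\<one>\<^bsub>G\<^esub> \<in> carrier G" using grp by (simp add: group.is_monoid monoid.one_closed)
lemma mult_c: "g \<in> carrier G \<Longrightarrow> h \<in> carrier G \<Longrightarrow> g \<otimes>\<^bsub>G\<^esub> h \<in> carrier G"
  using grp by (simp add: group.is_monoid monoid.m_closed)
lemma inv_c: "g \<in> carrier G \<Longrightarrow> inv\<^bsub>G\<^esub> g \<in> carrier G" using grp by (simp add: group.inv_closed)

lemma Pth_sp: "s \<in> S \<Longrightarrow> simple_path E x (\<phi> s x) (Pth s)"
  unfolding Pth_def using pth_sp xV phi_V Ssub by blast

lemma Pth_V: "s \<in> S \<Longrightarrow> set (Pth s) \<subseteq> V"
  using sp_setV[OF Pth_sp xV] by blast

lemma Pth_ne: "s \<in> S \<Longrightarrow> Pth s \<noteq> []"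
  using Pth_sp unfolding sp_wlk by (auto dest: wlk_nonempty)

lemma Pth_hd: "s \<in> S \<Longrightarrow> Pth s ! 0 = x"
  using Pth_sp Pth_ne unfolding sp_wlk by (metis hd_conv_nth)

lemma Pth_last: "s \<in> S \<Longrightarrow> last (Pth s) = \<phi> s x"
  using Pth_sp unfolding sp_wlk by auto

lemma Qs_V: "Qs \<subseteq> V" unfolding Qs_def using xV Pth_V by blast
lemma Qs_fin: "finite Qs" unfolding Qs_def using Sfin by simp

lemma M_V: "M \<subseteq> V" unfolding M_def using Qs_V phi_V by blast
lemma Qs_M: "Qs \<subseteq> M" unfolding M_def using one_c phi_one Qs_V by force
lemma x_M: "x \<in> M" using Qs_M unfolding Qs_def by blast

lemma phi_M: "g \<in> carrier G \<Longrightarrow> u \<in> M \<Longrightarrow> \<phi> g u \<in> M"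
proof -
  assume g: "g \<in> carrier G" and "u \<in> M"
  then obtain h q where u: "u = \<phi> h q" "h \<in> carrier G" "q \<in> Qs" unfolding M_def by blast
  have "\<phi> g u = \<phi> (g \<otimes>\<^bsub>G\<^esub> h) q" using phi_mult g u Qs_V by auto
  then show ?thesis unfolding M_def using mult_c g u by blast
qed

lemma cnt_M: "countable M"
proof -
  have "M = (\<lambda>(g, q). \<phi> g q) ` (carrier G \<times> Qs)" unfolding M_def by auto
  moreover have "countable (carrier G \<times> Qs)" using cnt Qs_fin countable_finite by (blast intro: countable_SIGMA)
  ultimately show ?thesis by simp
qed

lemma EM_M: "EM u v \<Longrightarrow> u \<in> M \<and> v \<in> M \<and> E u v"
proof -
  assume "EM u v"
  then obtain g s i where g: "g \<in> carrier G" "s \<in> S" "Suc i < length (Pth s)"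
    "(u = \<phi> g (Pth s ! i) \<and> v = \<phi> g (Pth s ! Suc i)) \<or> (v = \<phi> g (Pth s ! i) \<and> u = \<phi> g (Pth s ! Suc i))"
    unfolding EM_def by blast
  have "Pth s ! i \<in> set (Pth s)" "Pth s ! Suc i \<in> set (Pth s)" using g(3) by auto
  then have q: "Pth s ! i \<in> Qs" "Pth s ! Suc i \<in> Qs" unfolding Qs_def using g(2) by auto
  have e: "E (Pth s ! i) (Pth s ! Suc i)" using wlk_nth Pth_sp[OF g(2)] g(3) unfolding sp_wlk by blast
  have "E (\<phi> g (Pth s ! i)) (\<phi> g (Pth s ! Suc i))" using phi_E[OF g(1) e] .
  then show ?thesis using g(4) q g(1) E_sym unfolding M_def by blast
qed

lemma EM_sym: "EM u v \<Longrightarrow> EM v u" unfolding EM_def by blast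

lemma EM_phi: "h \<in> carrier G \<Longrightarrow> EM u v \<Longrightarrow> EM (\<phi> h u) (\<phi> h v)"
proof -
  assume h: "h \<in> carrier G" and "EM u v"
  then obtain g s i where g: "g \<in> carrier G" "s \<in> S" "Suc i < length (Pth s)"
    "(u = \<phi> g (Pth s ! i) \<and> v = \<phi> g (Pth s ! Suc i)) \<or> (v = \<phi> g (Pth s ! i) \<and> u = \<phi> g (Pth s ! Suc i))"
    unfolding EM_def by blast
  have V: "Pth s ! i \<in> V" "Pth s ! Suc i \<in> V" using Pth_V[OF g(2)] g(3) by auto
  have "\<phi> h (\<phi> g (Pth s ! i)) = \<phi> (h \<otimes>\<^bsub>G\<^esub> g) (Pth s ! i)"
       "\<phi> h (\<phi> g (Pth s ! Suc i)) = \<phi> (h \<otimes>\<^bsub>G\<^esub> g) (Pth s ! Suc i)"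
    using phi_mult[OF h g(1)] V by auto
  then show ?thesis unfolding EM_def using g mult_c[OF h g(1)] by metis
qed

lemma EM_path: "g \<in> carrier G \<Longrightarrow> s \<in> S \<Longrightarrow> wlk EM (map (\<phi> g) (Pth s))"
  by (rule wlk_by_nth) (auto simp: EM_def Pth_ne)

lemma conn_gen: "g \<in> generate G S \<Longrightarrow> \<exists>xs. wlk EM xs \<and> hd xs = x \<and> last xs = \<phi> g x"
proof (induction g rule: generate.induct)
  case one
  then show ?case using phi_one xV by (intro exI[of _ "[x]"]) simp
next
  case (incl s)
  have "map (\<phi> \<one>\<^bsub>G\<^esub>) (Pth s) = Pth s" using Pth_V[OF incl] phi_one by (simp add: map_idI subset_iff)
  then have "wlk EM (Pth s)" using EM_path[OF one_c incl] by simp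
  then show ?case using Pth_sp[OF incl] unfolding sp_wlk by blast
next
  case (inv s)
  have s: "s \<in> carrier G" using inv Ssub by blast
  let ?xs = "rev (map (\<phi> (inv\<^bsub>G\<^esub> s)) (Pth s))"
  have "wlk EM ?xs" using wlk_rev[OF _ EM_path[OF inv_c[OF s] inv]] EM_sym by blast
  moreover have "hd ?xs = x" using Pth_last[OF inv] Pth_ne[OF inv] phi_inv1[OF s xV]
    by (simp add: hd_rev last_map)
  moreover have "last ?xs = \<phi> (inv\<^bsub>G\<^esub> s) x" using Pth_sp[OF inv] Pth_ne[OF inv] unfolding sp_wlk
    by (simp add: last_rev hd_map)
  ultimately show ?case by blast
next
  case (eng h1 h2)
  have h1: "h1 \<in> carrier G" and h2: "h2 \<in> carrier G"
    using eng(1,2) group.generate_in_carrier[OF grp Ssub] by auto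
  obtain xs1 where x1: "wlk EM xs1" "hd xs1 = x" "last xs1 = \<phi> h1 x" using eng.IH(1) by blast
  obtain xs2 where x2: "wlk EM xs2" "hd xs2 = x" "last xs2 = \<phi> h2 x" using eng.IH(2) by blast
  have m2: "wlk EM (map (\<phi> h1) xs2)" using wlk_map[OF x2(1), of EM "\<phi> h1"] EM_phi[OF h1] by blast
  have ne2: "xs2 \<noteq> []" using x2(1) by (rule wlk_nonempty)
  have "wlk EM (xs1 @ tl (map (\<phi> h1) xs2))"
    using wlk_join[OF x1(1) m2] x1(3) x2(2) ne2 by (simp add: hd_map)
  moreover have "hd (xs1 @ tl (map (\<phi> h1) xs2)) = x" using x1 wlk_nonempty[OF x1(1)] by simp
  moreover have "last (xs1 @ tl (map (\<phi> h1) xs2)) = \<phi> (h1 \<otimes>\<^bsub>G\<^esub> h2) x"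
  proof (cases "tl xs2 = []")
    case True
    then have "xs2 = [x]" using ne2 x2(2) by (cases xs2) auto
    then have "\<phi> h2 x = x" using x2(3) by simp
    moreover have "tl (map (\<phi> h1) xs2) = []" using True by (simp add: map_tl[symmetric])
    ultimately show ?thesis using x1(3) phi_mult[OF h1 h2 xV] by simp
  next
    case False
    then have "last (tl (map (\<phi> h1) xs2)) = \<phi> h1 (last xs2)" by (simp add: last_tl last_map ne2 flip: map_tl)
    then show ?thesis using False x2(3) phi_mult[OF h1 h2 xV] by (simp flip: map_tl)
  qed
  ultimately show ?case by blast
qed

lemma conn: "u \<in> M \<Longrightarrow> \<exists>xs. wlk EM xs \<and> hd xs = x \<and> last xs = u"
proof -
  assume "u \<in> M"
  then obtain g q where u: "u = \<phi> g q" "g \<in> carrier G" "q \<in> Qs" unfolding M_def by blast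
  obtain xs where xs: "wlk EM xs" "hd xs = x" "last xs = \<phi> g x" using conn_gen u(2) Sgen by blast
  show ?thesis
  proof (cases "q = x")
    case True then show ?thesis using xs u by blast
  next
    case False
    then obtain s where s: "s \<in> S" "q \<in> set (Pth s)" using u(3) unfolding Qs_def by blast
    then obtain k where k: "k < length (Pth s)" "Pth s ! k = q" by (metis in_set_conv_nth)
    let ?ys = "take (Suc k) (map (\<phi> g) (Pth s))"
    have ys: "wlk EM ?ys" using wlk_take[OF EM_path[OF u(2) s(1)]] by simp
    have hy: "hd ?ys = \<phi> g x" using Pth_hd[OF s(1)] Pth_ne[OF s(1)] by (simp add: hd_conv_nth)
    have ly: "last ?ys = u" using k u by (simp add: take_Suc_conv_app_nth)
    have "wlk EM (xs @ tl ?ys)" using wlk_join[OF xs(1) ys] xs(3) hy by simp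
    moreover have "hd (xs @ tl ?ys) = x" using xs wlk_nonempty[OF xs(1)] by simp
    moreover have "last (xs @ tl ?ys) = u"
    proof (cases "tl ?ys = []")
      case True
      then have "?ys = [\<phi> g x]" using hy wlk_nonempty[OF ys] by (cases ?ys) auto
      then show ?thesis using True xs(3) ly by simp
    next
      case False then show ?thesis using ly by (simp add: last_tl)
    qed
    ultimately show ?thesis by blast
  qed
qed


definition enc where "enc = to_nat_on M"
definition dec where "dec = from_nat_into M"
definition T where "T = enc ` M"
definition ET where "ET n m \<longleftrightarrow> n \<in> T \<and> m \<in> T \<and> EM (dec n) (dec m)"
definition psi where "psi g = (\<lambda>n\<in>T. enc (\<phi> g (dec n)))"

lemma dec_enc[simp]: "u \<in> M \<Longrightarrow> dec (enc u) = u"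
  unfolding dec_def enc_def by (rule from_nat_into_to_nat_on[OF cnt_M])
lemma enc_dec[simp]: "n \<in> T \<Longrightarrow> enc (dec n) = n"
proof -
  assume "n \<in> T"
  then have "n \<in> to_nat_on M ` M" unfolding T_def enc_def .
  then show ?thesis unfolding dec_def enc_def by (rule to_nat_on_from_nat_into)
qed
lemma enc_T: "u \<in> M \<Longrightarrow> enc u \<in> T" unfolding T_def by blast
lemma dec_M: "n \<in> T \<Longrightarrow> dec n \<in> M" unfolding T_def by auto
lemma enc_inj: "u \<in> M \<Longrightarrow> v \<in> M \<Longrightarrow> enc u = enc v \<longleftrightarrow> u = v" using dec_enc by metis
lemma dec_inj: "n \<in> T \<Longrightarrow> m \<in> T \<Longrightarrow> dec n = dec m \<longleftrightarrow> n = m" using enc_dec by metis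

lemma ET_enc: "u \<in> M \<Longrightarrow> v \<in> M \<Longrightarrow> ET (enc u) (enc v) \<longleftrightarrow> EM u v"
  unfolding ET_def using enc_T by simp

lemma psi_enc: "g \<in> carrier G \<Longrightarrow> u \<in> M \<Longrightarrow> psi g (enc u) = enc (\<phi> g u)"
  unfolding psi_def using enc_T by simp

lemma psi_T: "g \<in> carrier G \<Longrightarrow> n \<in> T \<Longrightarrow> psi g n \<in> T"
  unfolding psi_def using enc_T phi_M dec_M by simp

lemma psi_app: "n \<in> T \<Longrightarrow> psi g n = enc (\<phi> g (dec n))"
  unfolding psi_def by simp

lemma dec_psi: "g \<in> carrier G \<Longrightarrow> n \<in> T \<Longrightarrow> dec (psi g n) = \<phi> g (dec n)"
  unfolding psi_def using phi_M dec_M by simp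

lemma EM_E: "wlk EM xs \<Longrightarrow> wlk E xs"
  using wlk_mono[of EM xs E] EM_M by blast

lemma wlk_EM_enc: "wlk EM xs \<Longrightarrow> wlk ET (map enc xs)"
  using wlk_map[of EM xs ET enc] EM_M ET_enc by blast

lemma ET_T: "ET n m \<Longrightarrow> n \<in> T \<and> m \<in> T" unfolding ET_def by blast

lemma sp_T_dec:
  assumes sp: "simple_path ET n m ns" and n: "n \<in> T"
  shows "simple_path E (dec n) (dec m) (map dec ns) \<and> set ns \<subseteq> T \<and> map enc (map dec ns) = ns"
proof -
  have w: "wlk ET ns" "hd ns = n" "last ns = m" "distinct ns" using sp unfolding sp_wlk by auto
  have ne: "ns \<noteq> []" using w(1) by (rule wlk_nonempty)
  have sT: "set ns \<subseteq> T" using wlk_set[of ET ns T] w n ET_T by blast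
  have "wlk EM (map dec ns)" using wlk_map[OF w(1), of EM dec] unfolding ET_def by blast
  then have "wlk E (map dec ns)" by (rule EM_E)
  moreover have "distinct (map dec ns)" using w(4) sT dec_inj
    by (simp add: distinct_map inj_on_def subset_iff)
  moreover have "map enc (map dec ns) = ns" using sT by (simp add: map_idI subset_iff)
  ultimately show ?thesis unfolding sp_wlk using w ne sT by (simp add: hd_map last_map)
qed

lemma tree_T: "is_tree T ET"
  unfolding is_tree_def
proof (intro conjI allI impI ballI)
  show "T \<noteq> {}" using x_M enc_T by blast
next
  fix n m assume "ET n m" then show "n \<in> T" "m \<in> T" using ET_T by auto
next
  fix n m assume "ET n m" then show "ET m n" unfolding ET_def using EM_sym by blast
next
  fix n show "\<not> ET n n" unfolding ET_def using EM_M E_irrefl by blast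
next
  fix n m assume n: "n \<in> T" and m: "m \<in> T"
  obtain xs1 where x1: "wlk EM xs1" "hd xs1 = x" "last xs1 = dec n" using conn dec_M n by blast
  obtain xs2 where x2: "wlk EM xs2" "hd xs2 = x" "last xs2 = dec m" using conn dec_M m by blast
  have r1: "wlk EM (rev xs1)" using wlk_rev[OF _ x1(1)] EM_sym by blast
  have ne1: "xs1 \<noteq> []" using x1(1) by (rule wlk_nonempty)
  have ne2: "xs2 \<noteq> []" using x2(1) by (rule wlk_nonempty)
  have j: "wlk EM (rev xs1 @ tl xs2)" using wlk_join[OF r1 x2(1)] x1 x2 ne1 by (simp add: last_rev)
  have hj: "hd (rev xs1 @ tl xs2) = dec n" using x1 ne1 by (simp add: hd_rev)
  have lj: "last (rev xs1 @ tl xs2) = dec m"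
  proof (cases "tl xs2 = []")
    case True
    then have "xs2 = [x]" using ne2 x2(2) by (cases xs2) auto
    then show ?thesis using x1 x2 True ne1 by (simp add: last_rev)
  next
    case False then show ?thesis using x2 by (simp add: last_tl)
  qed
  let ?ws = "map enc (rev xs1 @ tl xs2)"
  have wj: "wlk ET ?ws" using wlk_EM_enc[OF j] .
  have "hd ?ws = enc (hd (rev xs1 @ tl xs2))" using hd_map[OF wlk_nonempty[OF j]] .
  then have "hd ?ws = n" using hj n by simp
  moreover have "last ?ws = enc (last (rev xs1 @ tl xs2))" using last_map[OF wlk_nonempty[OF j]] .
  then have "last ?ws = m" using lj m by simp
  ultimately obtain ys where ys: "wlk ET ys" "hd ys = n" "last ys = m" "distinct ys"
    using wlk_shorten[OF wj] by metis
  then have ex: "simple_path ET n m ys" unfolding sp_wlk by simp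
  show "\<exists>!ns. simple_path ET n m ns"
  proof (rule ex1I)
    show "simple_path ET n m ys" by (rule ex)
  next
    fix ns assume ns: "simple_path ET n m ns"
    have a1: "simple_path E (dec n) (dec m) (map dec ns)" "map enc (map dec ns) = ns"
      using sp_T_dec[OF ns n] by auto
    have a2: "simple_path E (dec n) (dec m) (map dec ys)" "map enc (map dec ys) = ys"
      using sp_T_dec[OF ex n] by auto
    have V: "dec n \<in> V" "dec m \<in> V" using dec_M n m M_V by auto
    have "map dec ns = map dec ys" using sp_unique[OF a1(1) V] sp_unique[OF a2(1) V] by simp
    then show "ns = ys" using a1(2) a2(2) by metis
  qed
qed

interpretation TT: tree T ET by unfold_locales (rule tree_T)

lemma tdist_T: "u \<in> M \<Longrightarrow> v \<in> M \<Longrightarrow> tdist ET (enc u) (enc v) = tdist E u v"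
proof -
  assume u: "u \<in> M" and v: "v \<in> M"
  have sp: "simple_path ET (enc u) (enc v) (pth ET (enc u) (enc v))"
    using TT.pth_sp enc_T u v by blast
  have "simple_path E u v (map dec (pth ET (enc u) (enc v)))"
    using sp_T_dec[OF sp enc_T[OF u]] u v by simp
  then have "tdist E u v = length (pth ET (enc u) (enc v)) - 1"
    using tdist_sp u M_V by auto
  moreover have "tdist ET (enc u) (enc v) = length (pth ET (enc u) (enc v)) - 1"
    using TT.tdist_sp[OF sp] enc_T[OF u] by simp
  ultimately show ?thesis by simp
qed

lemma psi_bij: "g \<in> carrier G \<Longrightarrow> psi g \<in> Bij T"
proof -
  assume g: "g \<in> carrier G"
  have gi: "inv\<^bsub>G\<^esub> g \<in> carrier G" using inv_c g .
  have inj: "inj_on (psi g) T"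
  proof (rule inj_onI)
    fix n m assume n: "n \<in> T" and m: "m \<in> T" and e: "psi g n = psi g m"
    have "dec (psi g n) = dec (psi g m)" using e by simp
    then have "\<phi> g (dec n) = \<phi> g (dec m)" using dec_psi g n m by simp
    then have "dec n = dec m" using phi_inj g dec_M n m M_V by blast
    then show "n = m" using dec_inj n m by blast
  qed
  have img: "psi g ` T = T"
  proof
    show "psi g ` T \<subseteq> T" using psi_T g by blast
    show "T \<subseteq> psi g ` T"
    proof
      fix n assume n: "n \<in> T"
      have m: "psi (inv\<^bsub>G\<^esub> g) n \<in> T" using psi_T gi n by blast
      have "dec (psi g (psi (inv\<^bsub>G\<^esub> g) n)) = dec n"
        using dec_psi g gi n m phi_inv2 dec_M M_V by (simp add: subset_iff)
      then have "psi g (psi (inv\<^bsub>G\<^esub> g) n) = n" using dec_inj psi_T g m n by blast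
      then show "n \<in> psi g ` T" using m by (metis image_eqI)
    qed
  qed
  show ?thesis unfolding Bij_def using inj img by (simp add: bij_betw_def psi_def)
qed

lemma ga_T: "group_action G T psi"
  unfolding group_action_def group_hom_def group_hom_axioms_def
proof (intro conjI)
  show "group G" by (rule grp)
  show "group (BijGroup T)" by (rule group_BijGroup)
  show "psi \<in> hom G (BijGroup T)"
  proof (rule homI)
    fix g assume "g \<in> carrier G" then show "psi g \<in> carrier (BijGroup T)"
      using psi_bij by (simp add: BijGroup_def)
  next
    fix g h assume g: "g \<in> carrier G" and h: "h \<in> carrier G"
    have "psi g \<otimes>\<^bsub>BijGroup T\<^esub> psi h = compose T (psi g) (psi h)"
      using psi_bij g h by (simp add: BijGroup_def)
    also have "\<dots> = psi (g \<otimes>\<^bsub>G\<^esub> h)"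
    proof
      fix n show "compose T (psi g) (psi h) n = psi (g \<otimes>\<^bsub>G\<^esub> h) n"
      proof (cases "n \<in> T")
        case True
        have "psi g (psi h n) = enc (\<phi> g (dec (psi h n)))" using psi_app[OF psi_T[OF h True]] .
        also have "\<dots> = enc (\<phi> (g \<otimes>\<^bsub>G\<^esub> h) (dec n))" using dec_psi[OF h True] phi_mult g h dec_M True M_V
          by (simp add: subset_iff)
        finally have e: "psi g (psi h n) = enc (\<phi> (g \<otimes>\<^bsub>G\<^esub> h) (dec n))" .
        have "compose T (psi g) (psi h) n = psi g (psi h n)" using True by (simp add: compose_def)
        then show ?thesis using e psi_app[OF True, of "g \<otimes>\<^bsub>G\<^esub> h"] by simp
      next
        case False then show ?thesis unfolding psi_def compose_def by simp
      qed
    qed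
    finally show "psi (g \<otimes>\<^bsub>G\<^esub> h) = psi g \<otimes>\<^bsub>BijGroup T\<^esub> psi h" by simp
  qed
qed

lemma ET_psi1: "g \<in> carrier G \<Longrightarrow> ET n m \<Longrightarrow> ET (psi g n) (psi g m)"
proof -
  assume g: "g \<in> carrier G" and e: "ET n m"
  have nm: "n \<in> T" "m \<in> T" "EM (dec n) (dec m)" using e unfolding ET_def by auto
  have "EM (\<phi> g (dec n)) (\<phi> g (dec m))" using EM_phi[OF g nm(3)] .
  then show ?thesis unfolding ET_def using psi_T[OF g] nm dec_psi[OF g] by simp
qed

lemma tree_action_T: "tree_action G T ET psi"
  unfolding tree_action_def
proof (intro conjI ballI allI impI)
  show "is_tree T ET" by (rule tree_T)
  show "group_action G T psi" by (rule ga_T)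
next
  fix g n m assume g: "g \<in> carrier G" and n: "n \<in> T" and m: "m \<in> T"
  show "ET n m \<longleftrightarrow> ET (psi g n) (psi g m)"
  proof
    assume "ET n m" then show "ET (psi g n) (psi g m)" using ET_psi1 g by blast
  next
    assume "ET (psi g n) (psi g m)"
    then have "ET (psi (inv\<^bsub>G\<^esub> g) (psi g n)) (psi (inv\<^bsub>G\<^esub> g) (psi g m))" using ET_psi1 inv_c g by blast
    moreover have "psi (inv\<^bsub>G\<^esub> g) (psi g k) = k" if k: "k \<in> T" for k
    proof -
      have "dec (psi (inv\<^bsub>G\<^esub> g) (psi g k)) = dec k"
        using dec_psi[OF inv_c[OF g] psi_T[OF g k]] dec_psi[OF g k] phi_inv1[OF g] dec_M[OF k] M_V by auto
      then show ?thesis using dec_inj psi_T inv_c g k by blast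
    qed
    ultimately show "ET n m" using n m by simp
  qed
next
  fix g n m assume g: "g \<in> carrier G" and e: "ET n m"
  show "\<not> (psi g n = m \<and> psi g m = n)"
  proof
    assume a: "psi g n = m \<and> psi g m = n"
    have nm: "n \<in> T" "m \<in> T" "EM (dec n) (dec m)" using e unfolding ET_def by auto
    have "dec (psi g n) = \<phi> g (dec n)" "dec (psi g m) = \<phi> g (dec m)" using dec_psi[OF g] nm by auto
    then have "\<phi> g (dec n) = dec m" "\<phi> g (dec m) = dec n" using a by auto
    moreover have "E (dec n) (dec m)" using EM_M nm(3) by blast
    ultimately show False using no_inv[OF g] by blast
  qed
qed

end



lemma ga_vorbit:
  assumes grp: "group G" and ga: "group_action G X \<psi>" and g: "g \<in> carrier G" and m: "m \<in> X"
  shows "vorbit G \<psi> (\<psi> g m) = vorbit G \<psi> m"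
proof
  show "vorbit G \<psi> (\<psi> g m) \<subseteq> vorbit G \<psi> m"
  proof
    fix z assume "z \<in> vorbit G \<psi> (\<psi> g m)"
    then obtain h where h: "h \<in> carrier G" "z = \<psi> h (\<psi> g m)" unfolding vorbit_def by blast
    then have "z = \<psi> (h \<otimes>\<^bsub>G\<^esub> g) m" using group_action.composition_rule[OF ga m h(1) g] by simp
    moreover have "h \<otimes>\<^bsub>G\<^esub> g \<in> carrier G" using h g grp by (simp add: group.is_monoid monoid.m_closed)
    ultimately show "z \<in> vorbit G \<psi> m" unfolding vorbit_def by blast
  qed
next
  show "vorbit G \<psi> m \<subseteq> vorbit G \<psi> (\<psi> g m)"
  proof
    fix z assume "z \<in> vorbit G \<psi> m"
    then obtain h where h: "h \<in> carrier G" "z = \<psi> h m" unfolding vorbit_def by blast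
    define k where "k = h \<otimes>\<^bsub>G\<^esub> inv\<^bsub>G\<^esub> g"
    have k: "k \<in> carrier G" unfolding k_def using h g grp by (simp add: group.is_monoid monoid.m_closed group.inv_closed)
    have "k \<otimes>\<^bsub>G\<^esub> g = h" unfolding k_def using h g grp
      by (simp add: group.inv_closed monoid.m_assoc group.is_monoid group.l_inv monoid.r_one)
    then have "\<psi> k (\<psi> g m) = z" using group_action.composition_rule[OF ga m k g] h by simp
    then show "z \<in> vorbit G \<psi> (\<psi> g m)" unfolding vorbit_def using k by blast
  qed
qed

lemma ga_eorbit:
  assumes grp: "group G" and ga: "group_action G X \<psi>" and g: "g \<in> carrier G" and a: "a \<in> X" and b: "b \<in> X"
  shows "eorbit G \<psi> (\<psi> g a) (\<psi> g b) = eorbit G \<psi> a b"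
proof -
  have key: "\<exists>h'\<in>carrier G. \<psi> h (\<psi> g a) = \<psi> h' a \<and> \<psi> h (\<psi> g b) = \<psi> h' b" if h: "h \<in> carrier G" for h
    using group_action.composition_rule[OF ga a h g] group_action.composition_rule[OF ga b h g] h g grp
    by (metis group.is_monoid monoid.m_closed)
  have key2: "\<exists>h'\<in>carrier G. \<psi> h a = \<psi> h' (\<psi> g a) \<and> \<psi> h b = \<psi> h' (\<psi> g b)" if h: "h \<in> carrier G" for h
  proof -
    define k where "k = h \<otimes>\<^bsub>G\<^esub> inv\<^bsub>G\<^esub> g"
    have k: "k \<in> carrier G" unfolding k_def using h g grp by (simp add: group.is_monoid monoid.m_closed group.inv_closed)
    have "k \<otimes>\<^bsub>G\<^esub> g = h" unfolding k_def using h g grp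
      by (simp add: group.inv_closed monoid.m_assoc group.is_monoid group.l_inv monoid.r_one)
    then show ?thesis using group_action.composition_rule[OF ga a k g] group_action.composition_rule[OF ga b k g] k
      by metis
  qed
  show ?thesis
  proof
    show "eorbit G \<psi> (\<psi> g a) (\<psi> g b) \<subseteq> eorbit G \<psi> a b" unfolding eorbit_def using key by fastforce
    show "eorbit G \<psi> a b \<subseteq> eorbit G \<psi> (\<psi> g a) (\<psi> g b)" unfolding eorbit_def using key2 by fastforce
  qed
qed

context constr
begin

interpretation TT: tree T ET by unfold_locales (rule tree_T)
interpretation TA: tact T ET G psi
  unfolding tact_def tact_axioms_def tree_def using tree_T grp tree_action_T by blast

lemma psi_enc_M: "g \<in> carrier G \<Longrightarrow> u \<in> M \<Longrightarrow> psi g (enc u) = enc (\<phi> g u) \<and> \<phi> g u \<in> M"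
  using psi_enc phi_M by blast

lemma Pth_M: "s \<in> S \<Longrightarrow> k < length (Pth s) \<Longrightarrow> Pth s ! k \<in> M"
proof -
  assume s: "s \<in> S" and k: "k < length (Pth s)"
  have "Pth s ! k \<in> set (Pth s)" using k by simp
  then have "Pth s ! k \<in> Qs" unfolding Qs_def using s by blast
  then show ?thesis using Qs_M by blast
qed

lemma cocompact_T: "cocompact G T ET psi"
  unfolding cocompact_def
proof
  have "vorbit G psi ` T \<subseteq> (\<lambda>q. vorbit G psi (enc q)) ` Qs"
  proof
    fix Oo assume "Oo \<in> vorbit G psi ` T"
    then obtain n where n: "n \<in> T" "Oo = vorbit G psi n" by blast
    then have "dec n \<in> M" using dec_M by blast
    then obtain g q where gq: "dec n = \<phi> g q" "g \<in> carrier G" "q \<in> Qs" unfolding M_def by blast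
    have qM: "q \<in> M" using gq Qs_M by blast
    have "psi g (enc q) = n" using psi_enc[OF gq(2) qM] gq(1) enc_dec[OF n(1)] by simp
    then have "Oo = vorbit G psi (enc q)" using n ga_vorbit[OF grp ga_T gq(2) enc_T[OF qM]] by simp
    then show "Oo \<in> (\<lambda>q. vorbit G psi (enc q)) ` Qs" using gq by blast
  qed
  then show "finite (vorbit G psi ` T)" using finite_subset[OF _ finite_imageI[OF Qs_fin]] by blast
next
  define I where "I = Sigma S (\<lambda>s. {..<length (Pth s) - 1})"
  have fI: "finite I" unfolding I_def using Sfin by auto
  have "(\<lambda>(a, b). eorbit G psi a b) ` {(a, b). ET a b}
     \<subseteq> (\<lambda>(s, i). eorbit G psi (enc (Pth s ! i)) (enc (Pth s ! Suc i))) ` I"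
  proof
    fix Oo assume "Oo \<in> (\<lambda>(a, b). eorbit G psi a b) ` {(a, b). ET a b}"
    then obtain a b where ab: "ET a b" "Oo = eorbit G psi a b" by blast
    have aT: "a \<in> T" and bT: "b \<in> T" and em: "EM (dec a) (dec b)" using ab unfolding ET_def by auto
    obtain g s i where g: "g \<in> carrier G" "s \<in> S" "Suc i < length (Pth s)"
      "(dec a = \<phi> g (Pth s ! i) \<and> dec b = \<phi> g (Pth s ! Suc i)) \<or> (dec b = \<phi> g (Pth s ! i) \<and> dec a = \<phi> g (Pth s ! Suc i))"
      using em unfolding EM_def by blast
    have pM: "Pth s ! i \<in> M" "Pth s ! Suc i \<in> M" using Pth_M g(2,3) by auto
    have e1: "psi g (enc (Pth s ! i)) = enc (\<phi> g (Pth s ! i))" using psi_enc g(1) pM by blast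
    have e2: "psi g (enc (Pth s ! Suc i)) = enc (\<phi> g (Pth s ! Suc i))" using psi_enc g(1) pM by blast
    have eo: "eorbit G psi (psi g (enc (Pth s ! i))) (psi g (enc (Pth s ! Suc i)))
       = eorbit G psi (enc (Pth s ! i)) (enc (Pth s ! Suc i))"
      using ga_eorbit[OF grp ga_T g(1) enc_T enc_T] pM by blast
    have "Oo = eorbit G psi (enc (Pth s ! i)) (enc (Pth s ! Suc i))"
    proof (cases "dec a = \<phi> g (Pth s ! i) \<and> dec b = \<phi> g (Pth s ! Suc i)")
      case True
      then have "psi g (enc (Pth s ! i)) = a" "psi g (enc (Pth s ! Suc i)) = b"
        using e1 e2 enc_dec[OF aT] enc_dec[OF bT] by simp_all
      then show ?thesis using ab eo by simp
    next
      case False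
      then have "dec b = \<phi> g (Pth s ! i)" "dec a = \<phi> g (Pth s ! Suc i)" using g(4) by blast+
      then have "psi g (enc (Pth s ! i)) = b" "psi g (enc (Pth s ! Suc i)) = a"
        using e1 e2 enc_dec[OF aT] enc_dec[OF bT] by simp_all
      then show ?thesis using ab eo eorbit_sym[of G psi a b] by simp
    qed
    moreover have "(s, i) \<in> I" unfolding I_def using g by auto
    ultimately show "Oo \<in> (\<lambda>(s, i). eorbit G psi (enc (Pth s ! i)) (enc (Pth s ! Suc i))) ` I"
      by (intro rev_image_eqI[of "(s, i)"]) simp_all
  qed
  then show "finite ((\<lambda>(a, b). eorbit G psi a b) ` {(a, b). ET a b})" using finite_subset[OF _ finite_imageI[OF fI]] by blast
qed


lemma tdist_T2: "n \<in> T \<Longrightarrow> m \<in> T \<Longrightarrow> tdist ET n m = tdist E (dec n) (dec m)"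
  using tdist_T[OF dec_M dec_M] enc_dec by metis

lemma acyl_T:
  assumes ac: "acylindrical G V E \<phi>"
  shows "acylindrical G T ET psi"
  unfolding acylindrical_def
proof (intro allI impI)
  fix \<epsilon> :: real assume e: "\<epsilon> \<ge> 0"
  obtain R N where RN: "\<forall>x\<in>V. \<forall>y\<in>V. real (tdist E x y) \<ge> R \<longrightarrow>
        (let S = {g \<in> carrier G. real (tdist E x (\<phi> g x)) \<le> \<epsilon> \<and> real (tdist E y (\<phi> g y)) \<le> \<epsilon>}
         in finite S \<and> card S \<le> N)"
    using ac e unfolding acylindrical_def by blast
  show "\<exists>(R::real) (N::nat). \<forall>x\<in>T. \<forall>y\<in>T. real (tdist ET x y) \<ge> R \<longrightarrow>
        (let S = {g \<in> carrier G. real (tdist ET x (psi g x)) \<le> \<epsilon> \<and> real (tdist ET y (psi g y)) \<le> \<epsilon>}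
         in finite S \<and> card S \<le> N)"
  proof (intro exI ballI impI)
    fix n m assume n: "n \<in> T" and m: "m \<in> T" and d: "real (tdist ET n m) \<ge> R"
    have V: "dec n \<in> V" "dec m \<in> V" using dec_M n m M_V by auto
    have "{g \<in> carrier G. real (tdist ET n (psi g n)) \<le> \<epsilon> \<and> real (tdist ET m (psi g m)) \<le> \<epsilon>}
        = {g \<in> carrier G. real (tdist E (dec n) (\<phi> g (dec n))) \<le> \<epsilon> \<and> real (tdist E (dec m) (\<phi> g (dec m))) \<le> \<epsilon>}"
      using tdist_T2 psi_T dec_psi n m by auto
    moreover have "real (tdist E (dec n) (dec m)) \<ge> R" using d tdist_T2 n m by simp
    ultimately show "let S = {g \<in> carrier G. real (tdist ET n (psi g n)) \<le> \<epsilon> \<and> real (tdist ET m (psi g m)) \<le> \<epsilon>}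
         in finite S \<and> card S \<le> N" using RN V by simp
  qed
qed

lemma pow_psi: "g \<in> carrier G \<Longrightarrow> u \<in> M \<Longrightarrow> psi (g [^]\<^bsub>G\<^esub> (k::nat)) (enc u) = enc (\<phi> (g [^]\<^bsub>G\<^esub> k) u)"
  using psi_enc pow_closed by blast

lemma nonel_T:
  assumes ne: "non_elementary G V E \<phi>"
  shows "non_elementary G T ET psi"
proof -
  obtain L where L: "L \<subseteq> carrier G" "infinite L" "\<forall>g\<in>L. loxodromic G V E \<phi> g"
    "\<forall>g\<in>L. \<forall>h\<in>L. g \<noteq> h \<longrightarrow> indep_lox G V E \<phi> g h"
    using ne unfolding non_elementary_def by blast
  have xT: "enc x \<in> T" using enc_T x_M by blast
  have lox: "loxodromic G T ET psi g" if g: "g \<in> L" for g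
  proof -
    have gc: "g \<in> carrier G" using g L(1) by blast
    obtain c where c: "c > 0" "\<forall>n::nat. c * real n \<le> real (tdist E x (\<phi> (g [^]\<^bsub>G\<^esub> n) x))"
      using lox_at[OF _ xV] L(3) g by blast
    have "tdist ET (enc x) (psi (g [^]\<^bsub>G\<^esub> n) (enc x)) = tdist E x (\<phi> (g [^]\<^bsub>G\<^esub> n) x)" for n :: nat
      using pow_psi[OF gc x_M] tdist_T[OF x_M phi_M[OF pow_closed[OF gc] x_M]] by simp
    then have "\<forall>n::nat. c * real n \<le> real (tdist ET (enc x) (psi (g [^]\<^bsub>G\<^esub> n) (enc x)))"
      using c(2) by simp
    then show ?thesis unfolding loxodromic_def using gc xT c(1) by blast
  qed
  have ind: "indep_lox G T ET psi g h" if g: "g \<in> L" and h: "h \<in> L" and gh: "g \<noteq> h" for g h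
  proof -
    have gc: "g \<in> carrier G" and hc: "h \<in> carrier G" using g h L(1) by auto
    obtain B where B: "\<forall>g'\<in>{g, inv\<^bsub>G\<^esub> g}. \<forall>h'\<in>{h, inv\<^bsub>G\<^esub> h}. \<forall>(m::nat) (n::nat).
        gromov_prod E x (\<phi> (g' [^]\<^bsub>G\<^esub> m) x) (\<phi> (h' [^]\<^bsub>G\<^esub> n) x) \<le> B"
      using indep_at[OF _ gc hc xV] L(4) g h gh by blast
    have gp: "gromov_prod ET (enc x) (psi (g' [^]\<^bsub>G\<^esub> m) (enc x)) (psi (h' [^]\<^bsub>G\<^esub> n) (enc x))
        = gromov_prod E x (\<phi> (g' [^]\<^bsub>G\<^esub> m) x) (\<phi> (h' [^]\<^bsub>G\<^esub> n) x)"
      if g': "g' \<in> carrier G" and h': "h' \<in> carrier G" for g' h' and m n :: nat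
    proof -
      have M: "\<phi> (g' [^]\<^bsub>G\<^esub> m) x \<in> M" "\<phi> (h' [^]\<^bsub>G\<^esub> n) x \<in> M"
        using phi_M pow_closed g' h' x_M by auto
      show ?thesis unfolding gromov_prod_def using pow_psi[OF g' x_M] pow_psi[OF h' x_M]
        tdist_T[OF x_M M(1)] tdist_T[OF x_M M(2)] tdist_T[OF M(1) M(2)] by simp
    qed
    have "\<forall>g'\<in>{g, inv\<^bsub>G\<^esub> g}. \<forall>h'\<in>{h, inv\<^bsub>G\<^esub> h}. \<forall>(m::nat) (n::nat).
        gromov_prod ET (enc x) (psi (g' [^]\<^bsub>G\<^esub> m) (enc x)) (psi (h' [^]\<^bsub>G\<^esub> n) (enc x)) \<le> B"
    proof (intro ballI allI)
      fix g' h' and m n :: nat assume g': "g' \<in> {g, inv\<^bsub>G\<^esub> g}" and h': "h' \<in> {h, inv\<^bsub>G\<^esub> h}"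
      have "g' \<in> carrier G" "h' \<in> carrier G" using g' h' gc hc inv_c by auto
      then show "gromov_prod ET (enc x) (psi (g' [^]\<^bsub>G\<^esub> m) (enc x)) (psi (h' [^]\<^bsub>G\<^esub> n) (enc x)) \<le> B"
      proof -
        have "gromov_prod E x (\<phi> (g' [^]\<^bsub>G\<^esub> m) x) (\<phi> (h' [^]\<^bsub>G\<^esub> n) x) \<le> B"
          using B g' h' by blast
        then show ?thesis using gp[OF \<open>g' \<in> carrier G\<close> \<open>h' \<in> carrier G\<close>] by simp
      qed
    qed
    then show ?thesis unfolding indep_lox_def using xT by blast
  qed
  show ?thesis unfolding non_elementary_def using L(1,2) lox ind by blast
qed

lemma axis_T:
  assumes h: "h \<in> carrier G"
  shows "axis_pt G T ET psi (enc (\<phi> h x))"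
proof -
  obtain l0 \<tau> where l0: "l0 \<in> carrier G" "\<tau> > 0" "\<forall>n. tdist E x (\<phi> (l0 [^]\<^bsub>G\<^esub> n) x) = n * \<tau>"
    using xax unfolding axis_pt_def by blast
  define l where "l = (h \<otimes>\<^bsub>G\<^esub> l0) \<otimes>\<^bsub>G\<^esub> inv\<^bsub>G\<^esub> h"
  have l: "l \<in> carrier G" unfolding l_def using h l0 mult_c inv_c by blast
  have lw: "\<phi> l w = \<phi> h (\<phi> l0 (\<phi> (inv\<^bsub>G\<^esub> h) w))" if w: "w \<in> V" for w
    unfolding l_def using phi_mult mult_c[OF h l0(1)] inv_c[OF h] h l0(1) w phi_V by auto
  have ln: "\<phi> (l [^]\<^bsub>G\<^esub> n) (\<phi> h z) = \<phi> h (\<phi> (l0 [^]\<^bsub>G\<^esub> n) z)" if z: "z \<in> V" for n :: nat and z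
    using z
  proof (induction n arbitrary: z)
    case 0 then show ?case using phi_one phi_V h by simp
  next
    case (Suc n)
    have "\<phi> (l [^]\<^bsub>G\<^esub> Suc n) (\<phi> h z) = \<phi> (l [^]\<^bsub>G\<^esub> n) (\<phi> l (\<phi> h z))"
      using phi_pow1[OF l] phi_V h Suc.prems by blast
    also have "\<phi> l (\<phi> h z) = \<phi> h (\<phi> l0 z)" using lw phi_V h Suc.prems phi_inv1 by simp
    also have "\<phi> (l [^]\<^bsub>G\<^esub> n) (\<phi> h (\<phi> l0 z)) = \<phi> h (\<phi> (l0 [^]\<^bsub>G\<^esub> n) (\<phi> l0 z))"
      using Suc.IH phi_V l0(1) Suc.prems by blast
    also have "\<phi> (l0 [^]\<^bsub>G\<^esub> n) (\<phi> l0 z) = \<phi> (l0 [^]\<^bsub>G\<^esub> Suc n) z" using phi_pow1[OF l0(1) Suc.prems] by simp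
    finally show ?case .
  qed
  have hxM: "\<phi> h x \<in> M" using phi_M h x_M by blast
  have "tdist ET (enc (\<phi> h x)) (psi (l [^]\<^bsub>G\<^esub> n) (enc (\<phi> h x))) = n * \<tau>" for n :: nat
  proof -
    have "psi (l [^]\<^bsub>G\<^esub> n) (enc (\<phi> h x)) = enc (\<phi> h (\<phi> (l0 [^]\<^bsub>G\<^esub> n) x))"
      using pow_psi[OF l hxM] ln[OF xV] by simp
    moreover have "\<phi> h (\<phi> (l0 [^]\<^bsub>G\<^esub> n) x) \<in> M" using phi_M h pow_closed[OF l0(1)] x_M by blast
    ultimately have "tdist ET (enc (\<phi> h x)) (psi (l [^]\<^bsub>G\<^esub> n) (enc (\<phi> h x)))
        = tdist E (\<phi> h x) (\<phi> h (\<phi> (l0 [^]\<^bsub>G\<^esub> n) x))" using tdist_T hxM by simp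
    also have "\<dots> = tdist E x (\<phi> (l0 [^]\<^bsub>G\<^esub> n) x)" using tdist_phi h xV phi_V pow_closed[OF l0(1)] by simp
    finally show ?thesis using l0(3) by simp
  qed
  then show ?thesis unfolding axis_pt_def using enc_T hxM l l0(2) by blast
qed

lemma noc_T: "no_contractible_edges G T ET psi"
proof (rule TA.no_contr)
  fix a b assume ab: "ET a b"
  have aT: "a \<in> T" and bT: "b \<in> T" and em: "EM (dec a) (dec b)" using ab unfolding ET_def by auto
  obtain g s i where g: "g \<in> carrier G" "s \<in> S" "Suc i < length (Pth s)"
    "(dec a = \<phi> g (Pth s ! i) \<and> dec b = \<phi> g (Pth s ! Suc i)) \<or> (dec b = \<phi> g (Pth s ! i) \<and> dec a = \<phi> g (Pth s ! Suc i))"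
    using em unfolding EM_def by blast
  define P where "P = map enc (map (\<phi> g) (Pth s))"
  have sp0: "simple_path E (\<phi> g x) (\<phi> g (\<phi> s x)) (map (\<phi> g) (Pth s))"
    using phi_sp[OF Pth_sp[OF g(2)] xV g(1)] .
  have PM: "set (map (\<phi> g) (Pth s)) \<subseteq> M" using phi_M g(1) Pth_M g(2) by (auto simp: in_set_conv_nth)
  have wP: "wlk ET P" unfolding P_def using wlk_EM_enc[OF EM_path[OF g(1,2)]] .
  have dP: "distinct P" unfolding P_def using sp0 PM enc_inj unfolding sp_wlk
    by (simp add: distinct_map inj_on_def subset_iff)
  have ne: "Pth s \<noteq> []" using Pth_ne g(2) by blast
  have sc: "s \<in> carrier G" using g(2) Ssub by blast
  have hP: "hd P = enc (\<phi> g x)" unfolding P_def using ne Pth_sp[OF g(2)] unfolding sp_wlk by (simp add: hd_map)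
  have lP: "last P = enc (\<phi> (g \<otimes>\<^bsub>G\<^esub> s) x)" unfolding P_def using ne Pth_last[OF g(2)] phi_mult[OF g(1) sc xV]
    by (simp add: last_map)
  have spP: "simple_path ET (enc (\<phi> g x)) (enc (\<phi> (g \<otimes>\<^bsub>G\<^esub> s) x)) P" unfolding sp_wlk using wP dP hP lP by simp
  have ax1: "axis_pt G T ET psi (enc (\<phi> g x))" using axis_T g(1) by blast
  have ax2: "axis_pt G T ET psi (enc (\<phi> (g \<otimes>\<^bsub>G\<^esub> s) x))" using axis_T mult_c g(1) sc by blast
  have Pi: "P ! i = enc (\<phi> g (Pth s ! i))" "P ! Suc i = enc (\<phi> g (Pth s ! Suc i))" unfolding P_def using g(3) by auto
  have "(P ! i = a \<and> P ! Suc i = b) \<or> (P ! i = b \<and> P ! Suc i = a)"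
    using g(4) Pi enc_dec[OF aT] enc_dec[OF bT] by auto
  moreover have "Suc i < length P" unfolding P_def using g(3) by simp
  ultimately show "\<exists>P p q i. simple_path ET p q P \<and> axis_pt G T ET psi p \<and> axis_pt G T ET psi q
      \<and> Suc i < length P \<and> ((P ! i = a \<and> P ! Suc i = b) \<or> (P ! i = b \<and> P ! Suc i = a))"
    using spP ax1 ax2 by blast
qed

end

theorem lemma2p18:
  fixes G :: "('a, 'b) monoid_scheme" and V :: "'v set" and E :: "'v \<Rightarrow> 'v \<Rightarrow> bool"
    and \<phi> :: "'a \<Rightarrow> 'v \<Rightarrow> 'v"
  assumes "group G" and "countable (carrier G)" and "fin_gen G"
    and "tree_action G V E \<phi>" and "acylindrical G V E \<phi>" and "non_elementary G V E \<phi>"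
  shows "\<exists>(T :: nat set) (ET :: nat \<Rightarrow> nat \<Rightarrow> bool) (\<psi> :: 'a \<Rightarrow> nat \<Rightarrow> nat).
           tree_action G T ET \<psi> \<and> cocompact G T ET \<psi>
           \<and> non_elementary G T ET \<psi> \<and> acylindrical G T ET \<psi>
           \<and> no_contractible_edges G T ET \<psi>"
proof -
  interpret ta: tact V E G \<phi>
    using assms(1,4) unfolding tact_def tact_axioms_def tree_def tree_action_def by blast
  obtain S where S: "finite S" "S \<subseteq> carrier G" "generate G S = carrier G"
    using assms(3) unfolding fin_gen_def by blast
  obtain L where L: "L \<subseteq> carrier G" "infinite L" "\<forall>g\<in>L. loxodromic G V E \<phi> g"
    using assms(6) unfolding non_elementary_def by blast
  obtain l0 where l0: "l0 \<in> L" using L(2) by (metis finite.emptyI ex_in_conv)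
  have lox: "loxodromic G V E \<phi> l0" using L l0 by blast
  have l0c: "l0 \<in> carrier G" using L(1) l0 by blast
  have "\<forall>v\<in>V. \<phi> l0 v \<noteq> v" using ta.lox_nofix[OF lox, of _ 1] ta.pow_one_g[OF l0c] by simp
  then obtain x \<tau> where x: "x \<in> V" "\<tau> > 0" "\<forall>n. tdist E x (\<phi> (l0 [^]\<^bsub>G\<^esub> n) x) = n * \<tau>"
    using ta.axis_exists[OF l0c] by blast
  have ax: "axis_pt G V E \<phi> x" unfolding axis_pt_def using x l0c by blast
  interpret c: constr V E G \<phi> S x
    by unfold_locales (use S assms(2) x ax in auto)
  show ?thesis
    using c.tree_action_T c.cocompact_T c.nonel_T[OF assms(6)] c.acyl_T[OF assms(5)] c.noc_T by blast
qed


end
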